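(* Let $m,n$ be positive integers with at least one of $m,n$ greater than $1$. The pseudograph $\mathcal{K}_{m,n}$ admits a Möbius knight's tour if and only if at least one of $m$ and $n$ is odd.
   Context: Let $\mathcal{P}$ be the graph with vertex set $\mathbb{Z}^2$ in which $(a,b)$ and $(a',b')$ are adjacent iff $\{|a-a'|,|b-b'|\}=\{1,2\}$. For positive integers $m,n$ let $G$ be the group of automorphisms of $\mathcal{P}$ generated by $\tau(a,b)=(a+m,b)$ and $\sigma(a,b)=(m-1-a,\,b+n)$; it acts freely, and the knight's pseudograph of the $m\times n$ Klein bottle board is $\mathcal{K}_{m,n}=\mathcal{P}/G$ (vertices and edges are orbits; multiple edges and loops may occur), with covering map $\phi_K:\mathcal{P}\to\mathcal{K}_{m,n}$. A knight's tour is a closed walk visiting every vertex exactly once apart from the repeated start/end vertex (a Hamiltonian cycle). Regard a tour as a closed walk starting and ending at vertex $(0,0)$; it lifts uniquely to a walk in $\mathcal{P}$ starting at $(0,0)$. The tour is a Möbius tour if this lift ends at $(m-1,n)$ or $(m-1,-n)$ (equivalently, its homotopy class is the image of a generator of the fundamental group of the Möbius strip obtained by identifying only the top and bottom sides of the board with a half-twist). *)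

theory Defs
  imports Main
begin

type_synonym pt = "int \<times> int"

definition knight_adj :: "pt \<Rightarrow> pt \<Rightarrow> bool" where
  "knight_adj p q \<longleftrightarrow> {\<bar>fst p - fst q\<bar>, \<bar>snd p - snd q\<bar>} = {1, 2}"

definition kb_tau :: "int \<Rightarrow> pt \<Rightarrow> pt" where
  "kb_tau m p = (fst p + m, snd p)"
definition kb_tau_inv :: "int \<Rightarrow> pt \<Rightarrow> pt" where
  "kb_tau_inv m p = (fst p - m, snd p)"
definition kb_sigma :: "int \<Rightarrow> int \<Rightarrow> pt \<Rightarrow> pt" where
  "kb_sigma m n p = (m - 1 - fst p, snd p + n)"
definition kb_sigma_inv :: "int \<Rightarrow> int \<Rightarrow> pt \<Rightarrow> pt" where
  "kb_sigma_inv m n p = (m - 1 - fst p, snd p - n)"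

inductive_set kb_group :: "int \<Rightarrow> int \<Rightarrow> (pt \<Rightarrow> pt) set" for m n where
  id: "id \<in> kb_group m n"
| tau: "g \<in> kb_group m n \<Longrightarrow> kb_tau m \<circ> g \<in> kb_group m n"
| tau_inv: "g \<in> kb_group m n \<Longrightarrow> kb_tau_inv m \<circ> g \<in> kb_group m n"
| sigma: "g \<in> kb_group m n \<Longrightarrow> kb_sigma m n \<circ> g \<in> kb_group m n"
| sigma_inv: "g \<in> kb_group m n \<Longrightarrow> kb_sigma_inv m n \<circ> g \<in> kb_group m n"

text \<open>Vertices of K_{m,n}: G-orbits of points; phi_K maps a point to its orbit.\<close>
definition kb_vertex :: "int \<Rightarrow> int \<Rightarrow> pt \<Rightarrow> pt set" where
  "kb_vertex m n p = {g p | g. g \<in> kb_group m n}"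

text \<open>Edges of K_{m,n}: G-orbits of edges {p,q} of P; phi_K maps an edge to its orbit.\<close>
definition kb_edge :: "int \<Rightarrow> int \<Rightarrow> pt \<Rightarrow> pt \<Rightarrow> pt set set" where
  "kb_edge m n p q = {{g p, g q} | g. g \<in> kb_group m n}"

text \<open>A Moebius knight's tour of K_{m,n}, given through its unique lift
  p 0, ..., p N to P starting at (0,0): the projected closed walk
  visits every vertex exactly once (apart from the repeated start/end),
  uses pairwise distinct edges (it is a cycle), and the lift ends at
  (m-1, n) or (m-1, -n).\<close>
definition mobius_knight_tour :: "int \<Rightarrow> int \<Rightarrow> (nat \<Rightarrow> pt) \<Rightarrow> nat \<Rightarrow> bool" where
  "mobius_knight_tour m n p N \<longleftrightarrow>
     0 < N \<and>
     p 0 = (0, 0) \<and>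
     (\<forall>i<N. knight_adj (p i) (p (Suc i))) \<and>
     kb_vertex m n (p N) = kb_vertex m n (p 0) \<and>
     inj_on (\<lambda>i. kb_vertex m n (p i)) {0..<N} \<and>
     (\<forall>q. \<exists>i<N. kb_vertex m n (p i) = kb_vertex m n q) \<and>
     inj_on (\<lambda>i. kb_edge m n (p i) (p (Suc i))) {0..<N} \<and>
     (p N = (m - 1, n) \<or> p N = (m - 1, - n))"

end

theory Submission
  imports Defs
begin

definition kadj :: "pt \<Rightarrow> pt \<Rightarrow> bool" where
  "kadj p q \<longleftrightarrow> (\<bar>fst p - fst q\<bar> = 1 \<and> \<bar>snd p - snd q\<bar> = 2) \<or> (\<bar>fst p - fst q\<bar> = 2 \<and> \<bar>snd p - snd q\<bar> = 1)"

lemma knight_adj_kadj: "knight_adj p q \<longleftrightarrow> kadj p q"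
  unfolding knight_adj_def kadj_def by (auto simp: doubleton_eq_iff)

definition gmap :: "int \<Rightarrow> int \<Rightarrow> int \<Rightarrow> int \<Rightarrow> pt \<Rightarrow> pt" where
  "gmap m n j k p = ((if even j then fst p else m - 1 - fst p) + k * m, snd p + j * n)"

lemma group_gmap: "g \<in> kb_group m n \<Longrightarrow> \<exists>j k. g = gmap m n j k"
proof (induction rule: kb_group.induct)
  case id
  show ?case by (rule exI[of _ 0], rule exI[of _ 0]) (auto simp: gmap_def fun_eq_iff)
next
  case (tau g)
  then obtain j k where "g = gmap m n j k" by blast
  then show ?case by (intro exI[of _ j] exI[of _ "k+1"]) (auto simp: gmap_def fun_eq_iff kb_tau_def algebra_simps)
next
  case (tau_inv g)
  then obtain j k where "g = gmap m n j k" by blast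
  then show ?case by (intro exI[of _ j] exI[of _ "k-1"]) (auto simp: gmap_def fun_eq_iff kb_tau_inv_def algebra_simps)
next
  case (sigma g)
  then obtain j k where "g = gmap m n j k" by blast
  then show ?case by (intro exI[of _ "j+1"] exI[of _ "-k"]) (auto simp: gmap_def fun_eq_iff kb_sigma_def algebra_simps)
next
  case (sigma_inv g)
  then obtain j k where "g = gmap m n j k" by blast
  then show ?case by (intro exI[of _ "j-1"] exI[of _ "-k"]) (auto simp: gmap_def fun_eq_iff kb_sigma_inv_def algebra_simps)
qed

lemma gmap0_group: "gmap m n 0 k \<in> kb_group m n"
proof (induction k rule: int_induct[where k=0])
  case base
  have e: "gmap m n 0 0 = id" by (auto simp: gmap_def fun_eq_iff)
  show ?case by (subst e) (rule kb_group.id)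
next
  case (step1 i)
  have e: "gmap m n 0 (i+1) = kb_tau m \<circ> gmap m n 0 i" by (auto simp: gmap_def fun_eq_iff kb_tau_def algebra_simps)
  show ?case by (subst e) (rule kb_group.tau[OF step1(2)])
next
  case (step2 i)
  have e: "gmap m n 0 (i-1) = kb_tau_inv m \<circ> gmap m n 0 i" by (auto simp: gmap_def fun_eq_iff kb_tau_inv_def algebra_simps)
  show ?case by (subst e) (rule kb_group.tau_inv[OF step2(2)])
qed

lemma gmap_group: "gmap m n j k \<in> kb_group m n"
proof (induction j arbitrary: k rule: int_induct[where k=0])
  case base
  then show ?case by (rule gmap0_group)
next
  case (step1 i)
  have e: "gmap m n (i+1) k = kb_sigma m n \<circ> gmap m n i (-k)" by (auto simp: gmap_def fun_eq_iff kb_sigma_def algebra_simps)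
  show ?case by (subst e) (rule kb_group.sigma[OF step1(2)])
next
  case (step2 i)
  have e: "gmap m n (i-1) k = kb_sigma_inv m n \<circ> gmap m n i (-k)" by (auto simp: gmap_def fun_eq_iff kb_sigma_inv_def algebra_simps)
  show ?case by (subst e) (rule kb_group.sigma_inv[OF step2(2)])
qed

definition cls :: "int \<Rightarrow> int \<Rightarrow> pt \<Rightarrow> pt" where
  "cls m n p = ((if even (snd p div n) then fst p else m - 1 - fst p) mod m, snd p mod n)"

lemma mod_shift: "(x + k * m) mod m = (x::int) mod m" by simp

lemma cls_gmap:
  assumes "0 < n" shows "cls m n (gmap m n j k p) = cls m n p"
proof -
  obtain a b where p: "p = (a,b)" by (cases p)
  have d: "(b + j * n) div n = b div n + j" using assms by simp
  have md: "(b + j * n) mod n = b mod n" by simp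
  have e0: "(m - 1 - (a + k * m)) mod m = (m - 1 - a) mod m"
  proof -
    have "m - 1 - (a + k * m) = (m - 1 - a) + (-k) * m" by (simp add: algebra_simps)
    then show ?thesis by (simp only: mod_shift)
  qed
  have e1: "(m - 1 - (m - 1 - a + k * m)) mod m = a mod m"
  proof -
    have "m - 1 - (m - 1 - a + k * m) = a + (-k) * m" by (simp add: algebra_simps)
    then show ?thesis by (simp only: mod_shift)
  qed
  have e2: "(m - 1 - a + k * m) mod m = (m - 1 - a) mod m" by (rule mod_shift)
  have e3: "(a + k * m) mod m = a mod m" by (rule mod_shift)
  have e4: "(a - k * m) mod m = a mod m"
  proof -
    have "a - k * m = a + (-k) * m" by simp
    then show ?thesis by (simp only: mod_shift)
  qed
  have g: "gmap m n j k (a,b) = ((if even j then a else m - 1 - a) + k * m, b + j * n)"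
    by (simp add: gmap_def)
  show ?thesis
  proof (cases "even j")
    case True
    show ?thesis
    proof (cases "even (b div n)")
      case True
      then show ?thesis using \<open>even j\<close> by (simp add: cls_def g p d md e3)
    next
      case False
      then show ?thesis using \<open>even j\<close> by (simp add: cls_def g p d md e0)
    qed
  next
    case False
    show ?thesis
    proof (cases "even (b div n)")
      case True
      then show ?thesis using \<open>odd j\<close> by (simp add: cls_def g p d md e1 e4)
    next
      case False
      then show ?thesis using \<open>odd j\<close> by (simp add: cls_def g p d md e2)
    qed
  qed
qed

lemma mod_eq_ex: "(c::int) mod m = a mod m \<Longrightarrow> c = a + (c div m - a div m) * m"
proof -
  assume h: "c mod m = a mod m"
  have "c = m * (c div m) + c mod m" by simp
  moreover have "a = m * (a div m) + a mod m" by simp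
  moreover have "(c div m - a div m) * m = m * (c div m) - m * (a div m)" by (simp add: algebra_simps)
  ultimately show ?thesis using h by linarith
qed

lemma mod_neg_eq: "(m - 1 - (c::int)) mod m = (m - 1 - a) mod m \<Longrightarrow> c mod m = a mod m"
proof -
  assume h: "(m - 1 - c) mod m = (m - 1 - a) mod m"
  have "c = (m - 1) - (m - 1 - c)" by simp
  then have "c mod m = ((m - 1) - (m - 1 - c)) mod m" by simp
  also have "... = ((m - 1) - (m - 1 - a)) mod m" using h by (metis mod_diff_right_eq)
  also have "... = a mod m" by simp
  finally show ?thesis .
qed

lemma cls_eq_gmap:
  assumes "0 < m" "0 < n" "cls m n q = cls m n p"
  shows "\<exists>j k. q = gmap m n j k p"
proof -
  obtain a b where p: "p = (a,b)" by (cases p)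
  obtain c d where q: "q = (c,d)" by (cases q)
  define j where "j = d div n - b div n"
  have dm: "d mod n = b mod n" using assms(3) by (simp add: cls_def p q)
  have dj: "d = b + j * n"
    using mod_eq_ex[OF dm] by (simp add: j_def)
  have fm: "(if even (d div n) then c else m - 1 - c) mod m = (if even (b div n) then a else m - 1 - a) mod m"
    using assms(3) unfolding cls_def p q fst_conv snd_conv prod.inject by (rule conjunct1)
  have dd: "d div n = b div n + j" by (simp add: j_def)
  show ?thesis
  proof (cases "even j")
    case True
    have "c mod m = a mod m"
    proof (cases "even (b div n)")
      case True then show ?thesis using fm dd \<open>even j\<close> by simp
    next
      case False
      then have "(m - 1 - c) mod m = (m - 1 - a) mod m" using fm dd \<open>even j\<close> by simp
      then show ?thesis by (rule mod_neg_eq)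
    qed
    from mod_eq_ex[OF this] have "c = a + (c div m - a div m) * m" .
    then show ?thesis using True dj by (intro exI[of _ j] exI[of _ "c div m - a div m"]) (simp add: gmap_def p q)
  next
    case False
    have "c mod m = (m - 1 - a) mod m"
    proof (cases "even (b div n)")
      case True
      then have "(m - 1 - c) mod m = a mod m" using fm dd \<open>odd j\<close> by simp
      then have "(m - 1 - c) mod m = (m - 1 - (m - 1 - a)) mod m" by simp
      then show ?thesis by (rule mod_neg_eq)
    next
      case False
      then show ?thesis using fm dd \<open>odd j\<close> by simp
    qed
    from mod_eq_ex[OF this] have "c = (m - 1 - a) + (c div m - (m - 1 - a) div m) * m" .
    then show ?thesis using False dj by (intro exI[of _ j] exI[of _ "c div m - (m - 1 - a) div m"]) (simp add: gmap_def p q)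
  qed
qed

lemma kb_vertex_cls:
  assumes "0 < m" "0 < n"
  shows "kb_vertex m n p = {q. cls m n q = cls m n p}"
proof
  show "kb_vertex m n p \<subseteq> {q. cls m n q = cls m n p}"
  proof
    fix q assume "q \<in> kb_vertex m n p"
    then obtain g where g: "g \<in> kb_group m n" "q = g p" by (auto simp: kb_vertex_def)
    obtain j k where "g = gmap m n j k" using group_gmap[OF g(1)] by blast
    then show "q \<in> {q. cls m n q = cls m n p}" using g(2) cls_gmap[OF assms(2)] by simp
  qed
  show "{q. cls m n q = cls m n p} \<subseteq> kb_vertex m n p"
  proof
    fix q assume "q \<in> {q. cls m n q = cls m n p}"
    then obtain j k where "q = gmap m n j k p" using cls_eq_gmap[OF assms] by blast
    then show "q \<in> kb_vertex m n p" unfolding kb_vertex_def using gmap_group by blast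
  qed
qed

lemma vertex_eq_iff:
  assumes "0 < m" "0 < n"
  shows "kb_vertex m n p = kb_vertex m n q \<longleftrightarrow> cls m n p = cls m n q"
proof
  assume "kb_vertex m n p = kb_vertex m n q"
  then have "{r. cls m n r = cls m n p} = {r. cls m n r = cls m n q}" using kb_vertex_cls[OF assms] by simp
  then show "cls m n p = cls m n q" by (metis (mono_tags, lifting) mem_Collect_eq)
next
  assume "cls m n p = cls m n q"
  then show "kb_vertex m n p = kb_vertex m n q" using kb_vertex_cls[OF assms] by simp
qed

lemma gmap00: "gmap m n 0 0 p = p" by (simp add: gmap_def)

lemma gmap_fix: "0 < m \<Longrightarrow> 0 < n \<Longrightarrow> gmap m n j k q = q \<Longrightarrow> gmap m n j k p = p"
proof -
  assume m: "0 < m" and n: "0 < n" and h: "gmap m n j k q = q"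
  obtain x y where q: "q = (x,y)" by (cases q)
  from h have "y + j * n = y" by (simp add: gmap_def q)
  then have j: "j = 0" using n by simp
  from h have "x + k * m = x" using j by (simp add: gmap_def q)
  then have "k = 0" using m by simp
  then show ?thesis using j by (simp add: gmap00)
qed

definition box :: "int \<Rightarrow> int \<Rightarrow> pt set" where
  "box m n = {0..<m} \<times> {0..<n}"

lemma cls_box: "0 < m \<Longrightarrow> 0 < n \<Longrightarrow> cls m n q \<in> box m n"
  by (simp add: cls_def box_def)

lemma cls_id: "0 \<le> a \<Longrightarrow> a < m \<Longrightarrow> 0 \<le> b \<Longrightarrow> b < n \<Longrightarrow> cls m n (a,b) = (a,b)"
  by (simp add: cls_def)

lemma card_box: "0 < m \<Longrightarrow> 0 < n \<Longrightarrow> card (box m n) = nat (m * n)"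
  by (simp add: box_def card_cartesian_product nat_mult_distrib)

lemma cls_end: "0 < n \<Longrightarrow> cls m n (m - 1, n) = cls m n (0,0)" "0 < n \<Longrightarrow> cls m n (m - 1, - n) = cls m n (0,0)"
  by (simp_all add: cls_def zdiv_zminus1_eq_if)

definition gtour :: "int \<Rightarrow> int \<Rightarrow> (nat \<Rightarrow> pt) \<Rightarrow> nat \<Rightarrow> bool" where
  "gtour m n p N \<longleftrightarrow> N = nat (m * n) \<and> p 0 = (0,0) \<and> (p N = (m - 1, n) \<or> p N = (m - 1, - n)) \<and>
     (\<forall>i<N. kadj (p i) (p (Suc i))) \<and> inj_on (\<lambda>i. cls m n (p i)) {..<N}"

lemma cls_image_box:
  assumes m: "0 < m" and n: "0 < n" and N: "N = nat (m * n)" and inj: "inj_on (\<lambda>i. cls m n (p i)) {..<N}"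
  shows "(\<lambda>i. cls m n (p i)) ` {..<N} = box m n"
proof (rule card_subset_eq)
  show "finite (box m n)" by (simp add: box_def)
  show "(\<lambda>i. cls m n (p i)) ` {..<N} \<subseteq> box m n" by (rule image_subsetI) (rule cls_box[OF m n])
  show "card ((\<lambda>i. cls m n (p i)) ` {..<N}) = card (box m n)"
    using card_image[OF inj] card_box[OF m n] N by simp
qed

lemma gtour_mobius:
  assumes m: "0 < m" and n: "0 < n" and mn: "1 < m \<or> 1 < n" and g: "gtour m n p N"
  shows "mobius_knight_tour m n p N"
proof -
  have N: "N = nat (m * n)" and p0: "p 0 = (0,0)" and pN: "p N = (m - 1, n) \<or> p N = (m - 1, - n)"
    and adj: "\<forall>i<N. kadj (p i) (p (Suc i))" and inj: "inj_on (\<lambda>i. cls m n (p i)) {..<N}"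
    using g by (auto simp: gtour_def)
  have N2: "2 \<le> N"
  proof -
    have "2 \<le> m * n"
    proof (cases "1 < m")
      case True
      then have "2 * 1 \<le> m * n" using n by (intro mult_mono) auto
      then show ?thesis by simp
    next
      case False
      then have "1 < n" using mn by simp
      then have "1 * 2 \<le> m * n" using m by (intro mult_mono) auto
      then show ?thesis by simp
    qed
    then show ?thesis using N by simp
  qed
  let ?c = "\<lambda>i. cls m n (p i)"
  have cN: "?c N = ?c 0" using pN p0 cls_end[OF n] by auto
  have img: "?c ` {..<N} = box m n" by (rule cls_image_box[OF m n N inj])
  have vinj: "inj_on (\<lambda>i. kb_vertex m n (p i)) {0..<N}"
    using inj unfolding inj_on_def vertex_eq_iff[OF m n] by (simp add: atLeast0LessThan)
  have vsurj: "\<forall>q. \<exists>i<N. kb_vertex m n (p i) = kb_vertex m n q"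
  proof
    fix q
    have "cls m n q \<in> ?c ` {..<N}" using img cls_box[OF m n] by simp
    then obtain i where "i < N" "?c i = cls m n q" by auto
    then show "\<exists>i<N. kb_vertex m n (p i) = kb_vertex m n q" using vertex_eq_iff[OF m n] by auto
  qed
  have cidx: "\<And>t. t \<le> N \<Longrightarrow> ?c t = ?c (if t = N then 0 else t)" using cN by auto
  have einj: "inj_on (\<lambda>i. kb_edge m n (p i) (p (Suc i))) {0..<N}"
  proof (rule inj_onI)
    fix i j assume i: "i \<in> {0..<N}" and j: "j \<in> {0..<N}"
      and e: "kb_edge m n (p i) (p (Suc i)) = kb_edge m n (p j) (p (Suc j))"
    show "i = j"
    proof (rule ccontr)
      assume ij: "i \<noteq> j"
      have "{p j, p (Suc j)} = {gmap m n 0 0 (p j), gmap m n 0 0 (p (Suc j))}" by (simp add: gmap00)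
      then have "{p j, p (Suc j)} \<in> kb_edge m n (p j) (p (Suc j))"
        unfolding kb_edge_def using gmap_group[of m n 0 0] by blast
      then have "{p j, p (Suc j)} \<in> kb_edge m n (p i) (p (Suc i))" using e by simp
      then obtain gg where gg: "gg \<in> kb_group m n" "{p j, p (Suc j)} = {gg (p i), gg (p (Suc i))}"
        unfolding kb_edge_def by blast
      obtain a b where gab: "gg = gmap m n a b" using group_gmap[OF gg(1)] by blast
      have cg: "\<And>x. cls m n (gg x) = cls m n x" using gab cls_gmap[OF n] by simp
      have ii: "i < N" "j < N" using i j by auto
      have injc: "\<And>s t. s < N \<Longrightarrow> t < N \<Longrightarrow> ?c s = ?c t \<Longrightarrow> s = t" using inj by (auto dest: inj_onD)
      from gg(2) have "(p j = gg (p i) \<and> p (Suc j) = gg (p (Suc i))) \<or> (p j = gg (p (Suc i)) \<and> p (Suc j) = gg (p i))"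
        by (auto simp: doubleton_eq_iff)
      then show False
      proof
        assume "p j = gg (p i) \<and> p (Suc j) = gg (p (Suc i))"
        then have "?c j = ?c i" using cg by simp
        then show False using injc ii ij by auto
      next
        assume h: "p j = gg (p (Suc i)) \<and> p (Suc j) = gg (p i)"
        then have c1: "?c j = ?c (Suc i)" and c2: "?c (Suc j) = ?c i" using cg by auto
        have "N = 2 \<and> ((i = 0 \<and> j = 1) \<or> (i = 1 \<and> j = 0))"
        proof (cases "Suc i = N")
          case True
          then have "?c j = ?c 0" using c1 cN by simp
          then have j0: "j = 0" using injc ii N2 by auto
          show ?thesis
          proof (cases "Suc j = N")
            case True then show ?thesis using N2 j0 by simp
          next
            case False
            then have "Suc j < N" using ii by simp
            then have "Suc j = i" using injc c2 ii by auto
            then show ?thesis using j0 \<open>Suc i = N\<close> by simp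
          qed
        next
          case False
          then have "Suc i < N" using ii by simp
          then have ji: "j = Suc i" using injc c1 ii by auto
          show ?thesis
          proof (cases "Suc j = N")
            case True
            then have "?c 0 = ?c i" using c2 cN by simp
            then have "i = 0" using injc ii N2 by auto
            then show ?thesis using ji True by simp
          next
            case False
            then have "Suc j < N" using ii by simp
            then have "Suc j = i" using injc c2 ii by auto
            then show ?thesis using ji by simp
          qed
        qed
        then have N2': "N = 2" and cases: "(i = 0 \<and> j = 1) \<or> (i = 1 \<and> j = 0)" by auto
        have fix1: "gg (p 1) = p 1" using h cases by auto
        have "gg = gmap m n a b" by (rule gab)
        then have idg: "\<And>x. gg x = x" using gmap_fix[OF m n] fix1 by auto
        have "p 2 = p 0" using h cases idg by (auto simp: numeral_2_eq_2)
        then show False using pN N2' p0 n by auto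
      qed
    qed
  qed
  have v0: "kb_vertex m n (p N) = kb_vertex m n (p 0)" using cN vertex_eq_iff[OF m n] by simp
  have adj': "\<forall>i<N. knight_adj (p i) (p (Suc i))" using adj knight_adj_kadj by simp
  have N0: "0 < N" using N2 by simp
  show ?thesis unfolding mobius_knight_tour_def
    using N0 p0 adj' vsurj vinj einj pN v0 by blast
qed

lemma kadj_odd: "kadj a b \<Longrightarrow> odd (fst a + snd a - fst b - snd b)"
  unfolding kadj_def by (auto simp: abs_if) presburger+

lemma only_if:
  assumes m: "0 < m" and n: "0 < n" and em: "even m" and en: "even n"
    and t: "mobius_knight_tour m n p N"
  shows False
proof -
  have N0: "0 < N" and p0: "p 0 = (0,0)" and adj: "\<forall>i<N. knight_adj (p i) (p (Suc i))"
    and vinj: "inj_on (\<lambda>i. kb_vertex m n (p i)) {0..<N}"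
    and vsurj: "\<forall>q. \<exists>i<N. kb_vertex m n (p i) = kb_vertex m n q"
    and pN: "p N = (m - 1, n) \<or> p N = (m - 1, - n)"
    using t unfolding mobius_knight_tour_def by auto
  have par: "\<And>i. i \<le> N \<Longrightarrow> even (fst (p i) + snd (p i) + int i)"
  proof -
    fix i show "i \<le> N \<Longrightarrow> even (fst (p i) + snd (p i) + int i)"
    proof (induction i)
      case 0 then show ?case using p0 by simp
    next
      case (Suc i)
      then have "kadj (p i) (p (Suc i))" using adj knight_adj_kadj by simp
      then have "odd (fst (p i) + snd (p i) - fst (p (Suc i)) - snd (p (Suc i)))" by (rule kadj_odd)
      moreover have "even (fst (p i) + snd (p i) + int i)" using Suc by simp
      ultimately show ?case by presburger
    qed
  qed
  let ?c = "\<lambda>i. cls m n (p i)"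
  have cinj: "inj_on ?c {..<N}"
    using vinj unfolding inj_on_def vertex_eq_iff[OF m n] by (simp add: atLeast0LessThan)
  have img: "?c ` {..<N} = box m n"
  proof
    show "?c ` {..<N} \<subseteq> box m n" by (rule image_subsetI) (rule cls_box[OF m n])
    show "box m n \<subseteq> ?c ` {..<N}"
    proof
      fix q assume q: "q \<in> box m n"
      obtain a b where ab: "q = (a,b)" by (cases q)
      obtain i where i: "i < N" "kb_vertex m n (p i) = kb_vertex m n q" using vsurj by blast
      have "cls m n q = q" using q ab by (simp add: box_def cls_id)
      then have "?c i = q" using i(2) vertex_eq_iff[OF m n] by simp
      then show "q \<in> ?c ` {..<N}" using i(1) by force
    qed
  qed
  have "N = nat (m * n)" using card_image[OF cinj] img card_box[OF m n] by simp
  then have eN: "even (int N)" using em m n by (simp add: zero_le_mult_iff)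
  have "even (fst (p N) + snd (p N) + int N)" using par by simp
  then show False using pN eN em en by auto
qed

fun chain :: "pt list \<Rightarrow> bool" where
  "chain (a # b # r) = (kadj a b \<and> chain (b # r))"
| "chain _ = True"

lemma chain_nth: "chain ps \<Longrightarrow> Suc i < length ps \<Longrightarrow> kadj (ps ! i) (ps ! Suc i)"
proof (induction ps arbitrary: i rule: chain.induct)
  case (1 a b r)
  then show ?case by (cases i) auto
qed auto

definition chkG :: "int \<Rightarrow> int \<Rightarrow> pt list \<Rightarrow> bool" where
  "chkG m n ps \<longleftrightarrow> length ps = nat (m * n) + 1 \<and> hd ps = (0,0) \<and>
     (last ps = (m - 1, n) \<or> last ps = (m - 1, - n)) \<and> chain ps \<and> distinct (map (cls m n) (butlast ps))"

definition Ftour :: "int \<Rightarrow> int \<Rightarrow> (nat \<Rightarrow> pt) \<Rightarrow> nat \<Rightarrow> bool" where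
  "Ftour m n p N \<longleftrightarrow> gtour m n p N \<and> (\<forall>i<N. 0 \<le> snd (p i) \<and> snd (p i) < n) \<and> p N = (m - 1, n) \<and>
     (p (N - 1) = (m - 2, n - 2) \<or> p (N - 1) = (m - 3, n - 1))"

definition Fptour :: "int \<Rightarrow> int \<Rightarrow> (nat \<Rightarrow> pt) \<Rightarrow> nat \<Rightarrow> bool" where
  "Fptour m n p N \<longleftrightarrow> Ftour m n p N \<and> (\<forall>i<N. 0 \<le> fst (p i) \<and> fst (p i) < m) \<and> p (N - 1) = (m - 2, n - 2)"

definition Wtour :: "int \<Rightarrow> int \<Rightarrow> (nat \<Rightarrow> pt) \<Rightarrow> nat \<Rightarrow> bool" where
  "Wtour m n p N \<longleftrightarrow> gtour m n p N \<and> (\<forall>i<N. 0 \<le> fst (p i) \<and> fst (p i) < m) \<and> p N = (m - 1, n) \<and>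
     p (N - 1) = (m - 2, n - 2)"

definition chkF :: "int \<Rightarrow> int \<Rightarrow> pt list \<Rightarrow> bool" where
  "chkF m n ps \<longleftrightarrow> chkG m n ps \<and> last ps = (m - 1, n) \<and>
     (last (butlast ps) = (m - 2, n - 2) \<or> last (butlast ps) = (m - 3, n - 1)) \<and>
     (\<forall>q\<in>set (butlast ps). 0 \<le> snd q \<and> snd q < n)"

definition chkFp :: "int \<Rightarrow> int \<Rightarrow> pt list \<Rightarrow> bool" where
  "chkFp m n ps \<longleftrightarrow> chkF m n ps \<and> last (butlast ps) = (m - 2, n - 2) \<and>
     (\<forall>q\<in>set (butlast ps). 0 \<le> fst q \<and> fst q < m)"

definition chkW :: "int \<Rightarrow> int \<Rightarrow> pt list \<Rightarrow> bool" where
  "chkW m n ps \<longleftrightarrow> chkG m n ps \<and> last ps = (m - 1, n) \<and> last (butlast ps) = (m - 2, n - 2) \<and>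
     (\<forall>q\<in>set (butlast ps). 0 \<le> fst q \<and> fst q < m)"

lemma chkG_gtour:
  assumes m: "0 < m" and n: "0 < n" and c: "chkG m n ps"
  shows "gtour m n (\<lambda>i. ps ! i) (nat (m * n))"
proof -
  let ?N = "nat (m * n)"
  have len: "length ps = ?N + 1" and hd: "hd ps = (0,0)"
    and lst: "last ps = (m - 1, n) \<or> last ps = (m - 1, - n)" and ch: "chain ps"
    and d: "distinct (map (cls m n) (butlast ps))" using c by (auto simp: chkG_def)
  have ne: "ps \<noteq> []" using len by auto
  have a1: "ps ! 0 = (0,0)" using hd ne by (simp add: hd_conv_nth)
  have a2: "ps ! ?N = last ps" using ne len by (simp add: last_conv_nth)
  have a3: "\<forall>i<?N. kadj (ps!i) (ps ! Suc i)" using chain_nth[OF ch] len by simp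
  have a4: "inj_on (\<lambda>i. cls m n (ps!i)) {..<?N}"
  proof (rule inj_onI)
    fix i j assume i: "i \<in> {..<?N}" and j: "j \<in> {..<?N}" and e: "cls m n (ps!i) = cls m n (ps!j)"
    have lb: "length (butlast ps) = ?N" using len by simp
    have "map (cls m n) (butlast ps) ! i = map (cls m n) (butlast ps) ! j"
      using i j e lb by (simp add: nth_butlast)
    show "i = j"
    proof (rule ccontr)
      assume "i \<noteq> j"
      then have "map (cls m n) (butlast ps) ! i \<noteq> map (cls m n) (butlast ps) ! j"
        using d i j lb unfolding distinct_conv_nth by simp
      then show False using \<open>map (cls m n) (butlast ps) ! i = map (cls m n) (butlast ps) ! j\<close> by simp
    qed
  qed
  show ?thesis using a1 a2 a3 a4 lst by (simp add: gtour_def)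
qed

lemma butlast_facts:
  assumes len: "length ps = N + 1" and N: "0 < N"
  shows "last (butlast ps) = ps ! (N - 1)" "\<And>i. i < N \<Longrightarrow> ps ! i \<in> set (butlast ps)"
proof -
  have lb: "length (butlast ps) = N" using len by simp
  have "butlast ps \<noteq> []"
  proof
    assume "butlast ps = []"
    then have "length (butlast ps) = 0" by simp
    with lb N show False by simp
  qed
  then show "last (butlast ps) = ps ! (N - 1)" using lb N by (simp add: last_conv_nth nth_butlast)
  fix i assume "i < N"
  then have "butlast ps ! i = ps ! i" using len by (simp add: nth_butlast)
  then show "ps ! i \<in> set (butlast ps)" using \<open>i < N\<close> lb by (metis nth_mem)
qed

lemma pos_N: "0 < m \<Longrightarrow> 0 < n \<Longrightarrow> 0 < nat (m * n)" by simp

lemma chkF_Ftour: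
  assumes m: "0 < m" and n: "0 < n" and c: "chkF m n ps"
  shows "Ftour m n (\<lambda>i. ps ! i) (nat (m * n))"
proof -
  let ?N = "nat (m * n)"
  have g: "chkG m n ps" using c by (simp add: chkF_def)
  have len: "length ps = ?N + 1" using g by (simp add: chkG_def)
  have ne: "ps \<noteq> []" using len by auto
  have N: "0 < ?N" using m n by simp
  note bf = butlast_facts[OF len N]
  have "ps ! ?N = last ps" using ne len by (simp add: last_conv_nth)
  then show ?thesis using c chkG_gtour[OF m n g] bf unfolding Ftour_def chkF_def by auto
qed

lemma chkFp_Fptour:
  assumes m: "0 < m" and n: "0 < n" and c: "chkFp m n ps"
  shows "Fptour m n (\<lambda>i. ps ! i) (nat (m * n))"
proof -
  let ?N = "nat (m * n)"
  have f: "chkF m n ps" using c by (simp add: chkFp_def)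
  have g: "chkG m n ps" using f by (simp add: chkF_def)
  have len: "length ps = ?N + 1" using g by (simp add: chkG_def)
  have N: "0 < ?N" using m n by simp
  note bf = butlast_facts[OF len N]
  show ?thesis using c chkF_Ftour[OF m n f] bf unfolding Fptour_def chkFp_def by auto
qed

lemma chkW_Wtour:
  assumes m: "0 < m" and n: "0 < n" and c: "chkW m n ps"
  shows "Wtour m n (\<lambda>i. ps ! i) (nat (m * n))"
proof -
  let ?N = "nat (m * n)"
  have g: "chkG m n ps" using c by (simp add: chkW_def)
  have len: "length ps = ?N + 1" using g by (simp add: chkG_def)
  have ne: "ps \<noteq> []" using len by auto
  have N: "0 < ?N" using m n by simp
  note bf = butlast_facts[OF len N]
  have "ps ! ?N = last ps" using ne len by (simp add: last_conv_nth)
  then show ?thesis using c chkG_gtour[OF m n g] bf unfolding Wtour_def chkW_def by auto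
qed

lemma kadj_shift: "kadj (fst p + c, snd p + d) (fst q + c, snd q + d) = kadj p q"
  by (simp add: kadj_def)

lemma kadj_shift': "kadj (a + c, b + d) (a' + c, b' + d) = kadj (a, b) (a', b')"
  by (simp add: kadj_def)

definition bandok :: "int \<Rightarrow> pt list \<Rightarrow> bool" where
  "bandok n B \<longleftrightarrow> length B = nat (6 * n) \<and> B \<noteq> [] \<and> kadj (-2, n - 2) (hd B) \<and> chain B \<and>
     last B = (4, n - 2) \<and> distinct B \<and> (\<forall>q\<in>set B. 0 \<le> fst q \<and> fst q < 6 \<and> 0 \<le> snd q \<and> snd q < n)"

lemma cls_box_id: "q \<in> box m n \<Longrightarrow> cls m n q = q"
  by (cases q) (simp add: box_def cls_id)

lemma inj_cls_box:
  assumes "\<forall>i<N. p i \<in> box m n" and "inj_on (\<lambda>i. cls m n (p i)) {..<N}"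
  shows "inj_on p {..<N}"
  using assms cls_box_id unfolding inj_on_def by (metis lessThan_iff)

lemma inj_box_cls:
  assumes "\<forall>i<N. p i \<in> box m n" and "inj_on p {..<N}"
  shows "inj_on (\<lambda>i. cls m n (p i)) {..<N}"
  using assms cls_box_id unfolding inj_on_def by (metis lessThan_iff)

lemma L2:
  assumes m: "0 < m" and n: "0 < n" and t: "Fptour m n p N" and b: "bandok n B"
  defines "q \<equiv> (\<lambda>i. if i < N then p i else if i < N + length B then (m + fst (B ! (i - N)), snd (B ! (i - N))) else (m + 5, n))"
  shows "Fptour (m + 6) n q (N + length B)"
proof -
  have g: "gtour m n p N" and rows: "\<forall>i<N. 0 \<le> snd (p i) \<and> snd (p i) < n" and pN: "p N = (m - 1, n)"
    and cols: "\<forall>i<N. 0 \<le> fst (p i) \<and> fst (p i) < m" and E: "p (N - 1) = (m - 2, n - 2)"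
    using t by (auto simp: Fptour_def Ftour_def)
  have NN: "N = nat (m * n)" and p0: "p 0 = (0,0)" and adj: "\<forall>i<N. kadj (p i) (p (Suc i))"
    and inj: "inj_on (\<lambda>i. cls m n (p i)) {..<N}" using g by (auto simp: gtour_def)
  have L: "length B = nat (6 * n)" and Bne: "B \<noteq> []" and hdB: "kadj (-2, n - 2) (hd B)" and chB: "chain B"
    and lastB: "last B = (4, n - 2)" and dB: "distinct B"
    and rB: "\<forall>r\<in>set B. 0 \<le> fst r \<and> fst r < 6 \<and> 0 \<le> snd r \<and> snd r < n"
    using b by (auto simp: bandok_def)
  let ?L = "length B"
  have N0: "0 < N" using NN m n by simp
  have L0: "0 < ?L" using Bne by simp
  have NN': "N + ?L = nat ((m + 6) * n)" using NN L m n by (simp add: distrib_right nat_add_distrib)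
  have q0: "q 0 = (0,0)" using N0 p0 by (simp add: q_def)
  have qN: "q (N + ?L) = (m + 6 - 1, n)" by (simp add: q_def)
  have qlast: "q (N + ?L - 1) = (m + 6 - 2, n - 2)"
  proof -
    have "B ! (?L - 1) = (4, n - 2)" using lastB Bne by (simp add: last_conv_nth)
    moreover have "\<not> (N + ?L - 1 < N)" using L0 by arith
    moreover have "N + ?L - 1 < N + ?L" using L0 by arith
    moreover have "N + ?L - 1 - N = ?L - 1" using L0 by arith
    ultimately show ?thesis unfolding q_def by simp
  qed
  have qbox: "\<forall>i<N + ?L. q i \<in> box (m + 6) n"
  proof (intro allI impI)
    fix i assume i: "i < N + ?L"
    show "q i \<in> box (m + 6) n"
    proof (cases "i < N")
      case True then show ?thesis using rows cols by (auto simp: q_def box_def mem_Times_iff)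
    next
      case False
      then have "B ! (i - N) \<in> set B" using i by simp
      then have r: "0 \<le> fst (B ! (i - N)) \<and> fst (B ! (i - N)) < 6 \<and> 0 \<le> snd (B ! (i - N)) \<and> snd (B ! (i - N)) < n"
        using rB by blast
      show ?thesis using r m False i by (simp add: q_def box_def mem_Times_iff)
    qed
  qed
  have qinj: "inj_on q {..<N + ?L}"
  proof (rule inj_onI)
    fix i j assume i: "i \<in> {..<N + ?L}" and j: "j \<in> {..<N + ?L}" and e: "q i = q j"
    have pinj: "inj_on p {..<N}"
      using inj_cls_box[OF _ inj] rows cols by (auto simp: box_def mem_Times_iff)
    show "i = j"
    proof (cases "i < N")
      case True
      show ?thesis
      proof (cases "j < N")
        case True
        then show ?thesis using \<open>i < N\<close> e pinj by (auto simp: q_def inj_on_def)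
      next
        case False
        then have "fst (q j) \<ge> m" using j rB nth_mem[of "j - N" B] by (auto simp: q_def)
        moreover have "fst (q i) < m" using \<open>i < N\<close> cols by (simp add: q_def)
        ultimately show ?thesis using e by simp
      qed
    next
      case False
      show ?thesis
      proof (cases "j < N")
        case True
        then have "fst (q j) < m" using cols by (simp add: q_def)
        moreover have "fst (q i) \<ge> m" using False i rB nth_mem[of "i - N" B] by (auto simp: q_def)
        ultimately show ?thesis using e by simp
      next
        case False
        have "B ! (i - N) = B ! (j - N)" using e \<open>\<not> i < N\<close> False i j by (auto simp: q_def prod_eq_iff)
        then have "i - N = j - N" using dB i j \<open>\<not> i < N\<close> False by (auto simp: nth_eq_iff_index_eq)
        then show ?thesis using \<open>\<not> i < N\<close> False by simp
      qed
    qed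
  qed
  have qadj: "\<forall>i<N + ?L. kadj (q i) (q (Suc i))"
  proof (intro allI impI)
    fix i assume i: "i < N + ?L"
    consider "Suc i < N" | "Suc i = N" | "N \<le> i" "Suc i < N + ?L" | "Suc i = N + ?L" using i by linarith
    then show "kadj (q i) (q (Suc i))"
    proof cases
      case 1 then show ?thesis using adj by (simp add: q_def)
    next
      case 2
      then have iN: "i = N - 1" by simp
      have qi: "q i = (-2 + m, n - 2 + 0)" using E 2 unfolding iN by (simp add: q_def)
      have qs: "q (Suc i) = (fst (hd B) + m, snd (hd B) + 0)" using 2 L0 Bne by (simp add: q_def hd_conv_nth)
      show ?thesis unfolding qi qs using hdB kadj_shift'[of "-2" m "n - 2" 0 "fst (hd B)" "snd (hd B)"] by simp
    next
      case 3
      have k: "kadj (B ! (i - N)) (B ! Suc (i - N))" using chain_nth[OF chB] 3 by simp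
      have qi: "q i = (fst (B ! (i - N)) + m, snd (B ! (i - N)) + 0)" using 3 by (simp add: q_def)
      have qs: "q (Suc i) = (fst (B ! Suc (i - N)) + m, snd (B ! Suc (i - N)) + 0)"
        using 3 by (simp add: q_def Suc_diff_le)
      show ?thesis unfolding qi qs kadj_shift by (rule k)
    next
      case 4
      then have iN: "i = N + ?L - 1" by simp
      have "q i = (m + 6 - 2, n - 2)" using qlast unfolding iN .
      moreover have "q (Suc i) = (m + 6 - 1, n)" using qN 4 by simp
      ultimately show ?thesis by (simp add: kadj_def)
    qed
  qed
  have gt: "gtour (m + 6) n q (N + ?L)"
    unfolding gtour_def using NN' q0 qN qadj inj_box_cls[OF qbox qinj] by simp
  show ?thesis unfolding Fptour_def Ftour_def
    using gt qbox qN qlast by (auto simp: box_def)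
qed

definition tA :: "int \<Rightarrow> int \<Rightarrow> pt \<Rightarrow> pt" where
  "tA s n c = (if even (snd c div n) then fst c else 2 * s - 1 - fst c, snd c mod n)"
definition tB :: "int \<Rightarrow> int \<Rightarrow> pt \<Rightarrow> pt" where
  "tB s n c = (if even (snd c div n) then s + fst c else s - 1 - fst c, snd c mod n)"
definition emb :: "int \<Rightarrow> int \<Rightarrow> pt \<Rightarrow> pt" where
  "emb m s t = (if fst t < s then fst t else m + fst t, snd t)"

definition stripok :: "int \<Rightarrow> int \<Rightarrow> pt list \<Rightarrow> pt list \<Rightarrow> bool" where
  "stripok s n A B \<longleftrightarrow> 2 \<le> s \<and> A \<noteq> [] \<and> B \<noteq> [] \<and> hd A = (0,0) \<and> chain A \<and> kadj (last A) (s, 0) \<and>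
     kadj (-2, n - 2) (hd B) \<and> chain B \<and> last B = (s - 2, n - 2) \<and>
     (\<forall>c\<in>set A. 0 \<le> fst c \<and> fst c < s) \<and> (\<forall>c\<in>set B. 0 \<le> fst c \<and> fst c < s) \<and>
     length A + length B = nat (2 * s * n) \<and> distinct (map (tA s n) A @ map (tB s n) B)"

lemma clsA: "0 < m \<Longrightarrow> 0 \<le> fst c \<Longrightarrow> fst c < s \<Longrightarrow> cls (m + 2 * s) n c = emb m s (tA s n c)"
  by (cases c) (auto simp: cls_def tA_def emb_def)

lemma clsB: "0 < m \<Longrightarrow> 0 \<le> fst c \<Longrightarrow> fst c < s \<Longrightarrow> cls (m + 2 * s) n (m + s + fst c, snd c) = emb m s (tB s n c)"
  by (cases c) (auto simp: cls_def tB_def emb_def)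

lemma clsO: "0 \<le> fst c \<Longrightarrow> fst c < m \<Longrightarrow> 0 \<le> s \<Longrightarrow>
    cls (m + 2 * s) n (fst c + s, snd c) = (fst (cls m n c) + s, snd (cls m n c))"
  by (cases c) (auto simp: cls_def)

lemma tA_range: "0 \<le> fst c \<Longrightarrow> fst c < s \<Longrightarrow> 0 \<le> fst (tA s n c) \<and> fst (tA s n c) < 2 * s"
  by (auto simp: tA_def)
lemma tB_range: "0 \<le> fst c \<Longrightarrow> fst c < s \<Longrightarrow> 0 \<le> fst (tB s n c) \<and> fst (tB s n c) < 2 * s"
  by (auto simp: tB_def)

lemma emb_inj: "0 < m \<Longrightarrow> 0 \<le> fst t \<Longrightarrow> fst t < 2 * s \<Longrightarrow> 0 \<le> fst t' \<Longrightarrow> fst t' < 2 * s \<Longrightarrow>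
   emb m s t = emb m s t' \<Longrightarrow> t = t'"
  by (cases t, cases t') (auto simp: emb_def split: if_splits)

lemma emb_range: "0 < m \<Longrightarrow> 0 \<le> fst t \<Longrightarrow> fst t < 2 * s \<Longrightarrow> fst (emb m s t) < s \<or> m + s \<le> fst (emb m s t)"
  by (auto simp: emb_def)

lemma L3:
  assumes m: "0 < m" and n: "0 < n" and t: "Wtour m n p N" and st: "stripok s n A B"
  defines "a \<equiv> length A"
  defines "q \<equiv> (\<lambda>i. if i < a then A ! i else if i < a + N then (fst (p (i - a)) + s, snd (p (i - a)))
      else if i < a + N + length B then (m + s + fst (B ! (i - a - N)), snd (B ! (i - a - N))) else (m + 2 * s - 1, n))"
  shows "Wtour (m + 2 * s) n q (a + N + length B)"
proof -
  have g: "gtour m n p N" and cols: "\<forall>i<N. 0 \<le> fst (p i) \<and> fst (p i) < m" and pN: "p N = (m - 1, n)"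
    and E: "p (N - 1) = (m - 2, n - 2)"
    using t by (auto simp: Wtour_def)
  have NN: "N = nat (m * n)" and p0: "p 0 = (0,0)" and adj: "\<forall>i<N. kadj (p i) (p (Suc i))"
    and inj: "inj_on (\<lambda>i. cls m n (p i)) {..<N}" using g by (auto simp: gtour_def)
  have s2: "2 \<le> s" and Ane: "A \<noteq> []" and Bne: "B \<noteq> []" and hdA: "hd A = (0,0)" and chA: "chain A"
    and lA: "kadj (last A) (s, 0)" and hdB: "kadj (-2, n - 2) (hd B)" and chB: "chain B"
    and lastB: "last B = (s - 2, n - 2)" and rA: "\<forall>c\<in>set A. 0 \<le> fst c \<and> fst c < s"
    and rB: "\<forall>c\<in>set B. 0 \<le> fst c \<and> fst c < s" and len: "length A + length B = nat (2 * s * n)"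
    and dist: "distinct (map (tA s n) A @ map (tB s n) B)"
    using st by (auto simp: stripok_def)
  let ?b = "length B"
  let ?M = "a + N + ?b"
  have N0: "0 < N" using NN m n by simp
  have a0: "0 < a" using Ane by (simp add: a_def)
  have b0: "0 < ?b" using Bne by simp
  have MM: "?M = nat ((m + 2 * s) * n)"
  proof -
    have "?M = nat (m * n) + nat (2 * s * n)" using NN len by (simp add: a_def)
    also have "... = nat (m * n + 2 * s * n)" using m n s2 by (simp add: nat_add_distrib)
    finally show ?thesis by (simp add: distrib_right)
  qed
  have qA: "\<And>i. i < a \<Longrightarrow> q i = A ! i" by (simp add: q_def)
  have qO: "\<And>i. a \<le> i \<Longrightarrow> i < a + N \<Longrightarrow> q i = (fst (p (i - a)) + s, snd (p (i - a)))" by (simp add: q_def)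
  have qB: "\<And>i. a + N \<le> i \<Longrightarrow> i < ?M \<Longrightarrow> q i = (m + s + fst (B ! (i - a - N)), snd (B ! (i - a - N)))"
    by (simp add: q_def)
  have qM: "q ?M = (m + 2 * s - 1, n)" by (simp add: q_def)
  have iA: "\<And>i. i < a \<Longrightarrow> A ! i \<in> set A" by (simp add: a_def)
  have iB: "\<And>i. a + N \<le> i \<Longrightarrow> i < ?M \<Longrightarrow> B ! (i - a - N) \<in> set B" by simp
    let ?T = "map (tA s n) A @ map (tB s n) B"
  have lT: "length ?T = a + ?b" by (simp add: a_def)
  have TA: "\<And>i. i < a \<Longrightarrow> ?T ! i = tA s n (A ! i)" by (simp add: a_def nth_append)
  have TB: "\<And>j. j < ?b \<Longrightarrow> ?T ! (a + j) = tB s n (B ! j)" by (simp add: a_def nth_append)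
  define idx where "idx i = (if i < a then i else i - N)" for i
  have fS: "\<And>i. i < ?M \<Longrightarrow> \<not> (a \<le> i \<and> i < a + N) \<Longrightarrow>
      cls (m + 2 * s) n (q i) = emb m s (?T ! idx i) \<and> idx i < a + ?b \<and> 0 \<le> fst (?T ! idx i) \<and> fst (?T ! idx i) < 2 * s"
  proof -
    fix i assume i: "i < ?M" and ni: "\<not> (a \<le> i \<and> i < a + N)"
    show "cls (m + 2 * s) n (q i) = emb m s (?T ! idx i) \<and> idx i < a + ?b \<and> 0 \<le> fst (?T ! idx i) \<and> fst (?T ! idx i) < 2 * s"
    proof (cases "i < a")
      case True
      have r: "0 \<le> fst (A ! i) \<and> fst (A ! i) < s" using rA iA[OF True] by blast
      show ?thesis using True qA[OF True] TA[OF True] clsA[OF m] r tA_range[of "A ! i" s n]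
        by (simp add: idx_def)
    next
      case False
      then have i2: "a + N \<le> i" using ni by simp
      have r: "0 \<le> fst (B ! (i - a - N)) \<and> fst (B ! (i - a - N)) < s" using rB iB[OF i2 i] by blast
      have j: "i - a - N < ?b" using i i2 by simp
      have ix: "idx i = a + (i - a - N)" using False i2 by (simp add: idx_def)
      show ?thesis using qB[OF i2 i] TB[OF j] clsB[OF m] r tB_range[of "B ! (i - a - N)" s n] ix j
        by simp
    qed
  qed
  have fO: "\<And>i. a \<le> i \<Longrightarrow> i < a + N \<Longrightarrow>
      cls (m + 2 * s) n (q i) = (fst (cls m n (p (i - a))) + s, snd (cls m n (p (i - a))))
      \<and> s \<le> fst (cls (m + 2 * s) n (q i)) \<and> fst (cls (m + 2 * s) n (q i)) < m + s"
  proof -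
    fix i assume i1: "a \<le> i" and i2: "i < a + N"
    have r: "0 \<le> fst (p (i - a)) \<and> fst (p (i - a)) < m" using cols i1 i2 by auto
    have "cls (m + 2 * s) n (q i) = (fst (cls m n (p (i - a))) + s, snd (cls m n (p (i - a))))"
      using qO[OF i1 i2] clsO[of "p (i - a)" m s n] r s2 by simp
    moreover have "0 \<le> fst (cls m n (p (i - a))) \<and> fst (cls m n (p (i - a))) < m"
      using cls_box[OF m n, of "p (i - a)"] by (auto simp: box_def mem_Times_iff)
    ultimately show "cls (m + 2 * s) n (q i) = (fst (cls m n (p (i - a))) + s, snd (cls m n (p (i - a))))
      \<and> s \<le> fst (cls (m + 2 * s) n (q i)) \<and> fst (cls (m + 2 * s) n (q i)) < m + s" by simp
  qed
  have qinj: "inj_on (\<lambda>i. cls (m + 2 * s) n (q i)) {..<?M}"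
  proof (rule inj_onI)
    fix i j assume i: "i \<in> {..<?M}" and j: "j \<in> {..<?M}"
      and e: "cls (m + 2 * s) n (q i) = cls (m + 2 * s) n (q j)"
    show "i = j"
    proof (cases "a \<le> i \<and> i < a + N")
      case True
      note Oi = fO[OF conjunct1[OF True] conjunct2[OF True]]
      show ?thesis
      proof (cases "a \<le> j \<and> j < a + N")
        case True
        note Oj = fO[OF conjunct1[OF True] conjunct2[OF True]]
        have "cls m n (p (i - a)) = cls m n (p (j - a))" using Oi Oj e by (simp add: prod_eq_iff)
        then have "i - a = j - a" using inj \<open>a \<le> i \<and> i < a + N\<close> True by (auto dest: inj_onD)
        then show ?thesis using \<open>a \<le> i \<and> i < a + N\<close> True by arith
      next
        case False
        note Sj = fS[OF _ False] 
        have "fst (emb m s (?T ! idx j)) < s \<or> m + s \<le> fst (emb m s (?T ! idx j))"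
          using emb_range[OF m] Sj j by auto
        then show ?thesis using Oi Sj j e by auto
      qed
    next
      case False
      note Si = fS[OF _ False]
      show ?thesis
      proof (cases "a \<le> j \<and> j < a + N")
        case True
        note Oj = fO[OF conjunct1[OF True] conjunct2[OF True]]
        have "fst (emb m s (?T ! idx i)) < s \<or> m + s \<le> fst (emb m s (?T ! idx i))"
          using emb_range[OF m] Si i by auto
        then show ?thesis using Oj Si i e by auto
      next
        case False
        note Sj = fS[OF _ False]
        have si: "cls (m + 2 * s) n (q i) = emb m s (?T ! idx i) \<and> idx i < a + ?b \<and> 0 \<le> fst (?T ! idx i) \<and> fst (?T ! idx i) < 2 * s"
          using Si i by simp
        have sj: "cls (m + 2 * s) n (q j) = emb m s (?T ! idx j) \<and> idx j < a + ?b \<and> 0 \<le> fst (?T ! idx j) \<and> fst (?T ! idx j) < 2 * s"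
          using Sj j by simp
        have ei: "emb m s (?T ! idx i) = emb m s (?T ! idx j)" using si sj e by simp
        have "?T ! idx i = ?T ! idx j"
          using emb_inj[OF m _ _ _ _ ei] si sj by blast
        then have "idx i = idx j" using dist Si Sj i j lT by (auto simp: nth_eq_iff_index_eq)
        then show ?thesis using \<open>\<not> (a \<le> i \<and> i < a + N)\<close> False i j by (auto simp: idx_def split: if_splits)
      qed
    qed
  qed
  have qadj: "\<forall>i<?M. kadj (q i) (q (Suc i))"
  proof (intro allI impI)
    fix i assume i: "i < ?M"
    consider "Suc i < a" | "Suc i = a" | "a \<le> i" "Suc i < a + N" | "Suc i = a + N" | "a + N \<le> i" "Suc i < ?M" | "Suc i = ?M"
      using i by linarith
    then show "kadj (q i) (q (Suc i))"
    proof cases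
      case 1
      then show ?thesis using chain_nth[OF chA, of i] qA[of i] qA[of "Suc i"] by (simp add: a_def)
    next
      case 2
      have ia: "i = length A - 1" using 2 by (simp add: a_def)
      have "q i = last A" using 2 qA[of i] Ane unfolding ia by (simp add: a_def last_conv_nth)
      moreover have "q (Suc i) = (s, 0)" using 2 qO[of "Suc i"] N0 p0 by simp
      ultimately show ?thesis using lA by simp
    next
      case 3
      have k: "kadj (p (i - a)) (p (Suc (i - a)))" using adj 3 by simp
      have "q i = (fst (p (i - a)) + s, snd (p (i - a)) + 0)" using qO 3 by simp
      moreover have "q (Suc i) = (fst (p (Suc (i - a))) + s, snd (p (Suc (i - a))) + 0)"
        using qO[of "Suc i"] 3 by (simp add: Suc_diff_le)
      ultimately show ?thesis using k kadj_shift[of "p (i - a)" s 0 "p (Suc (i - a))"] by simp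
    next
      case 4
      then have ia: "i - a = N - 1" by simp
      have "q i = (-2 + (m + s), n - 2 + 0)" using qO[of i] 4 E ia N0 by simp
      moreover have "q (Suc i) = (fst (hd B) + (m + s), snd (hd B) + 0)"
        using qB[of "Suc i"] 4 b0 Bne by (simp add: hd_conv_nth)
      ultimately show ?thesis using hdB kadj_shift'[of "-2" "m + s" "n - 2" 0 "fst (hd B)" "snd (hd B)"] by simp
    next
      case 5
      have k: "kadj (B ! (i - a - N)) (B ! Suc (i - a - N))" using chain_nth[OF chB] 5 by simp
      have "q i = (fst (B ! (i - a - N)) + (m + s), snd (B ! (i - a - N)) + 0)" using qB 5 by simp
      moreover have "q (Suc i) = (fst (B ! Suc (i - a - N)) + (m + s), snd (B ! Suc (i - a - N)) + 0)"
        using qB[of "Suc i"] 5 by (simp add: Suc_diff_le)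
      ultimately show ?thesis using k kadj_shift[of "B ! (i - a - N)" "m + s" 0 "B ! Suc (i - a - N)"] by simp
    next
      case 6
      have "B ! (?b - 1) = (s - 2, n - 2)" using lastB Bne by (simp add: last_conv_nth)
      moreover have "i - a - N = ?b - 1" using 6 by simp
      moreover have "a + N \<le> i" using 6 b0 by arith
      ultimately have "q i = (m + 2 * s - 2, n - 2)" using qB[of i] 6 by (simp add: algebra_simps)
      moreover have "q (Suc i) = (m + 2 * s - 1, n)" using qM 6 by simp
      ultimately show ?thesis by (simp add: kadj_def)
    qed
  qed
  have q0: "q 0 = (0,0)" using qA[OF a0] hdA Ane by (simp add: hd_conv_nth)
  have qlast: "q (?M - 1) = (m + 2 * s - 2, n - 2)"
  proof -
    have "B ! (?b - 1) = (s - 2, n - 2)" using lastB Bne by (simp add: last_conv_nth)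
    moreover have "?M - 1 - a - N = ?b - 1" using b0 by arith
    moreover have "a + N \<le> ?M - 1" using b0 by arith
    moreover have "?M - 1 < ?M" using b0 by arith
    ultimately show ?thesis using qB[of "?M - 1"] by simp
  qed
  have qcols: "\<forall>i<?M. 0 \<le> fst (q i) \<and> fst (q i) < m + 2 * s"
  proof (intro allI impI)
    fix i assume i: "i < ?M"
    consider "i < a" | "a \<le> i" "i < a + N" | "a + N \<le> i" using i by linarith
    then show "0 \<le> fst (q i) \<and> fst (q i) < m + 2 * s"
    proof cases
      case 1 then show ?thesis using qA[OF 1] rA iA[OF 1] m by fastforce
    next
      case 2
      have "i - a < N" using 2 by arith
      then have "0 \<le> fst (p (i - a)) \<and> fst (p (i - a)) < m" using cols by blast
      then show ?thesis using qO[OF 2] s2 by simp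
    next
      case 3
      have r: "0 \<le> fst (B ! (i - a - N)) \<and> fst (B ! (i - a - N)) < s" using rB iB[OF 3 i] by blast
      show ?thesis using qB[OF 3 i] r m s2 by simp
    qed
  qed
  show ?thesis unfolding Wtour_def gtour_def
    using MM q0 qM qadj qinj qcols qlast by simp
qed

lemma zig_lemma:
  assumes "0 < (m::int)" "0 \<le> a" "a < m" "0 \<le> b" "b < m" "m dvd (a - b)"
  shows "a = b"
proof (rule ccontr)
  assume "a \<noteq> b"
  then have "\<bar>m\<bar> \<le> \<bar>a - b\<bar>" using assms(6) dvd_imp_le_int by force
  then show False using assms by arith
qed

lemma hel_lemma:
  assumes m: "0 < (m::int)" and om: "odd m" and "0 \<le> a" "a < 2 * m" "0 \<le> b" "b < 2 * m"
    and par: "a mod 2 = b mod 2" and d: "m dvd (2 * (a - b))"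
  shows "a = b"
proof -
  have cop: "coprime m 2" using om by simp
  have d1: "m dvd (a - b)" using d cop by (metis coprime_dvd_mult_right_iff mult.commute)
  have d2: "2 dvd (a - b)" using par by (simp add: mod_eq_dvd_iff)
  have "m * 2 dvd (a - b)" using d1 d2 cop by (simp add: divides_mult)
  show ?thesis
  proof (rule ccontr)
    assume "a \<noteq> b"
    then have "\<bar>m * 2\<bar> \<le> \<bar>a - b\<bar>" using \<open>m * 2 dvd (a - b)\<close> dvd_imp_le_int by force
    then show False using assms by arith
  qed
qed

lemma even_dvd_lemma: "even (m::int) \<Longrightarrow> m dvd d \<Longrightarrow> even d"
  using dvd_trans by blast

lemma mod_dvd: "(x::int) mod m = y mod m \<Longrightarrow> m dvd (x - y)"
  by (simp add: mod_eq_dvd_iff)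

lemma m2: "0 \<le> (x::int) mod 2" "(x::int) mod 2 < 2" by simp_all

definition bdo :: "int \<Rightarrow> int \<Rightarrow> nat \<Rightarrow> pt" where
  "bdo m n j = (if int j < 2 * m then (m - 1 + 2 * int j, n + int j mod 2)
     else (5 * m - 4 - 2 * (int j - 2 * m), n + 3 - (int j - 2 * m) mod 2))"

lemma bdo_adj:
  assumes m: "0 < m" and j: "int j + 1 < 4 * m"
  shows "kadj (bdo m n j) (bdo m n (Suc j))"
proof -
  consider "int j + 1 < 2 * m" | "int j + 1 = 2 * m" | "2 * m \<le> int j" by linarith
  then show ?thesis
  proof cases
    case 1
    then show ?thesis unfolding bdo_def kadj_def by simp presburger
  next
    case 2
    then have "int j mod 2 = 1" by presburger
    then show ?thesis using 2 unfolding bdo_def kadj_def by simp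
  next
    case 3
    then show ?thesis unfolding bdo_def kadj_def by simp presburger
  qed
qed

lemma bdo_inj:
  assumes m: "0 < m" and om: "odd m"
  shows "inj_on (\<lambda>j. (fst (bdo m n j) mod m, snd (bdo m n j))) {..<nat (4 * m)}"
proof (rule inj_onI)
  fix i j assume i: "i \<in> {..<nat (4 * m)}" and j: "j \<in> {..<nat (4 * m)}"
    and e: "(fst (bdo m n i) mod m, snd (bdo m n i)) = (fst (bdo m n j) mod m, snd (bdo m n j))"
  have ii: "int i < 4 * m" "int j < 4 * m" using i j by auto
  have r: "snd (bdo m n i) = snd (bdo m n j)" using e by simp
  have d: "m dvd (fst (bdo m n i) - fst (bdo m n j))" using e mod_dvd by simp
  have "int i = int j"
  proof (cases "int i < 2 * m")
    case True
    show ?thesis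
    proof (cases "int j < 2 * m")
      case True
      have par: "int i mod 2 = int j mod 2" using r \<open>int i < 2 * m\<close> True by (simp add: bdo_def)
      have "m dvd (2 * (int i - int j))" using d \<open>int i < 2 * m\<close> True by (simp add: bdo_def algebra_simps)
      then show ?thesis using hel_lemma[OF m om, of "int i" "int j"] par \<open>int i < 2 * m\<close> True by simp
    next
      case False
      then show ?thesis using r \<open>int i < 2 * m\<close> m2[of "int i"] m2[of "int j - 2 * m"] by (simp add: bdo_def)
    qed
  next
    case False
    show ?thesis
    proof (cases "int j < 2 * m")
      case True
      then show ?thesis using r False m2[of "int j"] m2[of "int i - 2 * m"] by (simp add: bdo_def)
    next
      case False
      have par: "(int i - 2 * m) mod 2 = (int j - 2 * m) mod 2" using r \<open>\<not> int i < 2 * m\<close> False by (simp add: bdo_def)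
      have "m dvd (2 * ((int j - 2 * m) - (int i - 2 * m)))" using d \<open>\<not> int i < 2 * m\<close> False
        by (simp add: bdo_def algebra_simps)
      then have "int j - 2 * m = int i - 2 * m"
        using hel_lemma[OF m om, of "int j - 2 * m" "int i - 2 * m"] par \<open>\<not> int i < 2 * m\<close> False ii by simp
      then show ?thesis by simp
    qed
  qed
  then show "i = j" by simp
qed

definition bde :: "int \<Rightarrow> int \<Rightarrow> nat \<Rightarrow> pt" where
  "bde m n j = (if int j < m then (m - 1 + int j, n + 2 * (int j mod 2))
     else if int j < 2 * m then (2 * m - (int j - m), n + 3 - 2 * ((int j - m) mod 2))
     else if int j < 3 * m then (m - 1 + (int j - 2 * m), n + 2 - 2 * ((int j - 2 * m) mod 2))
     else (2 * m - 4 - (int j - 3 * m), n + 1 + 2 * ((int j - 3 * m) mod 2)))"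

lemma bde0: "int j < m \<Longrightarrow> 0 < m \<Longrightarrow> bde m n j = (m - 1 + int j, n + 2 * (int j mod 2))"
  by (auto simp: bde_def)

lemma bde1: "m \<le> int j \<Longrightarrow> int j < 2 * m \<Longrightarrow> 0 < m \<Longrightarrow> bde m n j = (2 * m - (int j - m), n + 3 - 2 * ((int j - m) mod 2))"
  by (auto simp: bde_def)

lemma bde2: "2 * m \<le> int j \<Longrightarrow> int j < 3 * m \<Longrightarrow> 0 < m \<Longrightarrow> bde m n j = (m - 1 + (int j - 2 * m), n + 2 - 2 * ((int j - 2 * m) mod 2))"
  by (auto simp: bde_def)

lemma bde3: "3 * m \<le> int j \<Longrightarrow> 0 < m \<Longrightarrow> bde m n j = (2 * m - 4 - (int j - 3 * m), n + 1 + 2 * ((int j - 3 * m) mod 2))"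
  by (auto simp: bde_def)

lemma bde_inj:
  assumes m: "0 < m" and em: "even m"
  shows "inj_on (\<lambda>j. (fst (bde m n j) mod m, snd (bde m n j))) {..<nat (4 * m)}"
proof (rule inj_onI)
  fix i j assume i: "i \<in> {..<nat (4 * m)}" and j: "j \<in> {..<nat (4 * m)}"
    and e: "(fst (bde m n i) mod m, snd (bde m n i)) = (fst (bde m n j) mod m, snd (bde m n j))"
  have ii: "int i < 4 * m" "int j < 4 * m" using i j by auto
  have r: "snd (bde m n i) = snd (bde m n j)" using e by simp
  have d: "m dvd (fst (bde m n i) - fst (bde m n j))" using e mod_dvd by simp
  have "int i = int j"
  proof -
    consider "int i < m" | "m \<le> int i \<and> int i < 2 * m" | "2 * m \<le> int i \<and> int i < 3 * m" | "3 * m \<le> int i" by linarith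
    then show ?thesis
    proof cases
      case 1
      note A = this
      have pa: "bde m n i = (m - 1 + int i, n + 2 * (int i mod 2))" by (rule bde0) (use A m in auto)
      consider "int j < m" | "m \<le> int j \<and> int j < 2 * m" | "2 * m \<le> int j \<and> int j < 3 * m" | "3 * m \<le> int j" by linarith
      then show ?thesis
      proof cases
        case 1
        note B = this
        have pb: "bde m n j = (m - 1 + int j, n + 2 * (int j mod 2))" by (rule bde0) (use B m in auto)
        have par: "(int i) mod 2 = (int j) mod 2" using r pa pb by simp
        have dd: "m dvd ((int i) - (int j))" using d pa pb by (simp add: algebra_simps dvd_diff_commute)
        have "int i = int j" by (rule zig_lemma[OF m _ _ _ _ dd]) (use A B ii in auto)
        then show ?thesis by simp
        next
        case 2
        note B = this
        have pb: "bde m n j = (2 * m - (int j - m), n + 3 - 2 * ((int j - m) mod 2))" by (rule bde1) (use B m in auto)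
        show ?thesis using r pa pb m2[of "int i"] m2[of "int j - m"] by (simp; presburger)
        next
        case 3
        note B = this
        have pb: "bde m n j = (m - 1 + (int j - 2 * m), n + 2 - 2 * ((int j - 2 * m) mod 2))" by (rule bde2) (use B m in auto)
        have par: "(int i) mod 2 \<noteq> (int j - 2 * m) mod 2" using r pa pb m2[of "int i"] m2[of "int j - 2 * m"] by (simp; presburger)
        have "even (fst (bde m n i) - fst (bde m n j))" by (rule even_dvd_lemma[OF em d])
        then show ?thesis using par pa pb by (simp; presburger)
        next
        case 4
        note B = this
        have pb: "bde m n j = (2 * m - 4 - (int j - 3 * m), n + 1 + 2 * ((int j - 3 * m) mod 2))" by (rule bde3) (use B m in auto)
        show ?thesis using r pa pb m2[of "int i"] m2[of "int j - 3 * m"] by (simp; presburger)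
      qed
      next
      case 2
      note A = this
      have pa: "bde m n i = (2 * m - (int i - m), n + 3 - 2 * ((int i - m) mod 2))" by (rule bde1) (use A m in auto)
      consider "int j < m" | "m \<le> int j \<and> int j < 2 * m" | "2 * m \<le> int j \<and> int j < 3 * m" | "3 * m \<le> int j" by linarith
      then show ?thesis
      proof cases
        case 1
        note B = this
        have pb: "bde m n j = (m - 1 + int j, n + 2 * (int j mod 2))" by (rule bde0) (use B m in auto)
        show ?thesis using r pa pb m2[of "int i - m"] m2[of "int j"] by (simp; presburger)
        next
        case 2
        note B = this
        have pb: "bde m n j = (2 * m - (int j - m), n + 3 - 2 * ((int j - m) mod 2))" by (rule bde1) (use B m in auto)
        have par: "(int i - m) mod 2 = (int j - m) mod 2" using r pa pb by simp
        have dd: "m dvd ((int i - m) - (int j - m))" using d pa pb by (simp add: algebra_simps dvd_diff_commute)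
        have "int i - m = int j - m" by (rule zig_lemma[OF m _ _ _ _ dd]) (use A B ii in auto)
        then show ?thesis by simp
        next
        case 3
        note B = this
        have pb: "bde m n j = (m - 1 + (int j - 2 * m), n + 2 - 2 * ((int j - 2 * m) mod 2))" by (rule bde2) (use B m in auto)
        show ?thesis using r pa pb m2[of "int i - m"] m2[of "int j - 2 * m"] by (simp; presburger)
        next
        case 4
        note B = this
        have pb: "bde m n j = (2 * m - 4 - (int j - 3 * m), n + 1 + 2 * ((int j - 3 * m) mod 2))" by (rule bde3) (use B m in auto)
        have par: "(int i - m) mod 2 \<noteq> (int j - 3 * m) mod 2" using r pa pb m2[of "int i - m"] m2[of "int j - 3 * m"] by (simp; presburger)
        have "even (fst (bde m n i) - fst (bde m n j))" by (rule even_dvd_lemma[OF em d])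
        then show ?thesis using par pa pb by (simp; presburger)
      qed
      next
      case 3
      note A = this
      have pa: "bde m n i = (m - 1 + (int i - 2 * m), n + 2 - 2 * ((int i - 2 * m) mod 2))" by (rule bde2) (use A m in auto)
      consider "int j < m" | "m \<le> int j \<and> int j < 2 * m" | "2 * m \<le> int j \<and> int j < 3 * m" | "3 * m \<le> int j" by linarith
      then show ?thesis
      proof cases
        case 1
        note B = this
        have pb: "bde m n j = (m - 1 + int j, n + 2 * (int j mod 2))" by (rule bde0) (use B m in auto)
        have par: "(int i - 2 * m) mod 2 \<noteq> (int j) mod 2" using r pa pb m2[of "int i - 2 * m"] m2[of "int j"] by (simp; presburger)
        have "even (fst (bde m n i) - fst (bde m n j))" by (rule even_dvd_lemma[OF em d])
        then show ?thesis using par pa pb by (simp; presburger)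
        next
        case 2
        note B = this
        have pb: "bde m n j = (2 * m - (int j - m), n + 3 - 2 * ((int j - m) mod 2))" by (rule bde1) (use B m in auto)
        show ?thesis using r pa pb m2[of "int i - 2 * m"] m2[of "int j - m"] by (simp; presburger)
        next
        case 3
        note B = this
        have pb: "bde m n j = (m - 1 + (int j - 2 * m), n + 2 - 2 * ((int j - 2 * m) mod 2))" by (rule bde2) (use B m in auto)
        have par: "(int i - 2 * m) mod 2 = (int j - 2 * m) mod 2" using r pa pb by simp
        have dd: "m dvd ((int i - 2 * m) - (int j - 2 * m))" using d pa pb by (simp add: algebra_simps dvd_diff_commute)
        have "int i - 2 * m = int j - 2 * m" by (rule zig_lemma[OF m _ _ _ _ dd]) (use A B ii in auto)
        then show ?thesis by simp
        next
        case 4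
        note B = this
        have pb: "bde m n j = (2 * m - 4 - (int j - 3 * m), n + 1 + 2 * ((int j - 3 * m) mod 2))" by (rule bde3) (use B m in auto)
        show ?thesis using r pa pb m2[of "int i - 2 * m"] m2[of "int j - 3 * m"] by (simp; presburger)
      qed
      next
      case 4
      note A = this
      have pa: "bde m n i = (2 * m - 4 - (int i - 3 * m), n + 1 + 2 * ((int i - 3 * m) mod 2))" by (rule bde3) (use A m in auto)
      consider "int j < m" | "m \<le> int j \<and> int j < 2 * m" | "2 * m \<le> int j \<and> int j < 3 * m" | "3 * m \<le> int j" by linarith
      then show ?thesis
      proof cases
        case 1
        note B = this
        have pb: "bde m n j = (m - 1 + int j, n + 2 * (int j mod 2))" by (rule bde0) (use B m in auto)
        show ?thesis using r pa pb m2[of "int i - 3 * m"] m2[of "int j"] by (simp; presburger)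
        next
        case 2
        note B = this
        have pb: "bde m n j = (2 * m - (int j - m), n + 3 - 2 * ((int j - m) mod 2))" by (rule bde1) (use B m in auto)
        have par: "(int i - 3 * m) mod 2 \<noteq> (int j - m) mod 2" using r pa pb m2[of "int i - 3 * m"] m2[of "int j - m"] by (simp; presburger)
        have "even (fst (bde m n i) - fst (bde m n j))" by (rule even_dvd_lemma[OF em d])
        then show ?thesis using par pa pb by (simp; presburger)
        next
        case 3
        note B = this
        have pb: "bde m n j = (m - 1 + (int j - 2 * m), n + 2 - 2 * ((int j - 2 * m) mod 2))" by (rule bde2) (use B m in auto)
        show ?thesis using r pa pb m2[of "int i - 3 * m"] m2[of "int j - 2 * m"] by (simp; presburger)
        next
        case 4
        note B = this
        have pb: "bde m n j = (2 * m - 4 - (int j - 3 * m), n + 1 + 2 * ((int j - 3 * m) mod 2))" by (rule bde3) (use B m in auto)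
        have par: "(int i - 3 * m) mod 2 = (int j - 3 * m) mod 2" using r pa pb by simp
        have dd: "m dvd ((int i - 3 * m) - (int j - 3 * m))" using d pa pb by (simp add: algebra_simps dvd_diff_commute)
        have "int i - 3 * m = int j - 3 * m" by (rule zig_lemma[OF m _ _ _ _ dd]) (use A B ii in auto)
        then show ?thesis by simp
      qed
    qed
  qed
  then show "i = j" by simp
qed

lemma bde_adj:
  assumes m: "0 < m" and em: "even m" and j: "int j + 1 < 4 * m"
  shows "kadj (bde m n j) (bde m n (Suc j))"
proof -
  have o: "odd (m - 1)" using em by simp
  consider "int j + 1 < m" | "int j + 1 = m" | "m \<le> int j \<and> int j + 1 < 2 * m" | "int j + 1 = 2 * m"
    | "2 * m \<le> int j \<and> int j + 1 < 3 * m" | "int j + 1 = 3 * m" | "3 * m \<le> int j" using j by linarith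
  then show ?thesis
  proof cases
    case 1 then show ?thesis unfolding bde_def kadj_def by simp presburger
  next
    case 2
    then have "int j mod 2 = 1" using em by presburger
    then show ?thesis using 2 unfolding bde_def kadj_def by simp
  next
    case 3 then show ?thesis unfolding bde_def kadj_def by simp presburger
  next
    case 4
    then have "(int j - m) mod 2 = 1" using em by presburger
    then show ?thesis using 4 m unfolding bde_def kadj_def by simp
  next
    case 5 then show ?thesis unfolding bde_def kadj_def by simp presburger
  next
    case 6
    then have "(int j - 2 * m) mod 2 = 1" using em by presburger
    then show ?thesis using 6 m unfolding bde_def kadj_def by simp
  next
    case 7 then show ?thesis unfolding bde_def kadj_def by simp presburger
  qed
qed

lemma cls_rows: "0 \<le> snd c \<Longrightarrow> snd c < n \<Longrightarrow> cls m n c = (fst c mod m, snd c)"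
  by (simp add: cls_def)

lemma L1gen:
  assumes m: "0 < m" and n: "0 < n" and t: "Ftour m n p N"
    and b0: "bd 0 = (m - 1, n)"
    and badj: "\<forall>j. int j + 1 < 4 * m \<longrightarrow> kadj (bd j) (bd (Suc j))"
    and brow: "\<forall>j. int j < 4 * m \<longrightarrow> n \<le> snd (bd j) \<and> snd (bd j) < n + 4"
    and binj: "inj_on (\<lambda>j. (fst (bd j) mod m, snd (bd j))) {..<nat (4 * m)}"
    and bE: "bd (nat (4 * m) - 1) = (m - 2, n + 2) \<or> bd (nat (4 * m) - 1) = (m - 3, n + 3)"
  defines "q \<equiv> (\<lambda>i. if i < N then p i else if i < N + nat (4 * m) then bd (i - N) else (m - 1, n + 4))"
  shows "Ftour m (n + 4) q (N + nat (4 * m))"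
proof -
  have g: "gtour m n p N" and rows: "\<forall>i<N. 0 \<le> snd (p i) \<and> snd (p i) < n" and pN: "p N = (m - 1, n)"
    and E: "p (N - 1) = (m - 2, n - 2) \<or> p (N - 1) = (m - 3, n - 1)"
    using t by (auto simp: Ftour_def)
  have NN: "N = nat (m * n)" and p0: "p 0 = (0,0)" and adj: "\<forall>i<N. kadj (p i) (p (Suc i))"
    and inj: "inj_on (\<lambda>i. cls m n (p i)) {..<N}" using g by (auto simp: gtour_def)
  let ?L = "nat (4 * m)"
  let ?M = "N + ?L"
  have N0: "0 < N" using NN m n by simp
  have L0: "0 < ?L" using m by simp
  have MM: "?M = nat (m * (n + 4))" using NN m n by (simp add: distrib_left nat_add_distrib)
  have qO: "\<And>i. i < N \<Longrightarrow> q i = p i" by (simp add: q_def)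
  have qB: "\<And>i. N \<le> i \<Longrightarrow> i < ?M \<Longrightarrow> q i = bd (i - N)" by (simp add: q_def)
  have qM: "q ?M = (m - 1, n + 4)" by (simp add: q_def)
  have clsO: "\<And>i. i < N \<Longrightarrow> cls m (n + 4) (q i) = cls m n (p i)"
  proof -
    fix i assume i: "i < N"
    have r: "0 \<le> snd (p i) \<and> snd (p i) < n" using rows i by blast
    have "cls m (n + 4) (p i) = (fst (p i) mod m, snd (p i))" using r by (intro cls_rows) auto
    moreover have "cls m n (p i) = (fst (p i) mod m, snd (p i))" using r by (intro cls_rows) auto
    ultimately show "cls m (n + 4) (q i) = cls m n (p i)" using qO[OF i] by simp
  qed
  have clsB: "\<And>i. N \<le> i \<Longrightarrow> i < ?M \<Longrightarrow> cls m (n + 4) (q i) = (fst (bd (i - N)) mod m, snd (bd (i - N)))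
      \<and> n \<le> snd (bd (i - N))"
  proof -
    fix i assume i1: "N \<le> i" and i2: "i < ?M"
    have "int (i - N) < 4 * m" using i1 i2 by linarith
    then have "n \<le> snd (bd (i - N)) \<and> snd (bd (i - N)) < n + 4" using brow by blast
    then show "cls m (n + 4) (q i) = (fst (bd (i - N)) mod m, snd (bd (i - N))) \<and> n \<le> snd (bd (i - N))"
      using qB[OF i1 i2] n cls_rows[of "bd (i - N)" "n + 4" m] by simp
  qed
  have snO: "\<And>i. i < N \<Longrightarrow> snd (cls m n (p i)) < n"
    using rows cls_rows by simp
  have qinj: "inj_on (\<lambda>i. cls m (n + 4) (q i)) {..<?M}"
  proof (rule inj_onI)
    fix i j assume i: "i \<in> {..<?M}" and j: "j \<in> {..<?M}" and e: "cls m (n + 4) (q i) = cls m (n + 4) (q j)"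
    show "i = j"
    proof (cases "i < N")
      case True
      show ?thesis
      proof (cases "j < N")
        case True
        then show ?thesis using \<open>i < N\<close> e clsO inj by (auto dest: inj_onD)
      next
        case False
        have "snd (cls m (n + 4) (q j)) \<ge> n" using clsB[of j] False j by simp
        moreover have "snd (cls m (n + 4) (q i)) < n" using clsO[OF \<open>i < N\<close>] snO[OF \<open>i < N\<close>] by simp
        ultimately show ?thesis using e by simp
      qed
    next
      case False
      show ?thesis
      proof (cases "j < N")
        case True
        have "snd (cls m (n + 4) (q i)) \<ge> n" using clsB[of i] False i by simp
        moreover have "snd (cls m (n + 4) (q j)) < n" using clsO[OF True] snO[OF True] by simp
        ultimately show ?thesis using e by simp
      next
        case False
        have "(fst (bd (i - N)) mod m, snd (bd (i - N))) = (fst (bd (j - N)) mod m, snd (bd (j - N)))"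
          using clsB[of i] clsB[of j] \<open>\<not> i < N\<close> False i j e by simp
        moreover have "i - N \<in> {..<?L}" "j - N \<in> {..<?L}" using i j \<open>\<not> i < N\<close> False by auto
        ultimately have "i - N = j - N" using binj by (auto dest: inj_onD)
        then show ?thesis using \<open>\<not> i < N\<close> False by arith
      qed
    qed
  qed
  have qadj: "\<forall>i<?M. kadj (q i) (q (Suc i))"
  proof (intro allI impI)
    fix i assume i: "i < ?M"
    consider "Suc i < N" | "Suc i = N" | "N \<le> i" "Suc i < ?M" | "Suc i = ?M" using i by linarith
    then show "kadj (q i) (q (Suc i))"
    proof cases
      case 1 then show ?thesis using adj qO by simp
    next
      case 2
      then have iN: "i = N - 1" by simp
      have "q i = p (N - 1)" using qO 2 iN by simp
      moreover have "q (Suc i) = (m - 1, n)" using qB[of "Suc i"] 2 b0 L0 by simp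
      ultimately show ?thesis using E by (auto simp: kadj_def)
    next
      case 3
      have "int (i - N) + 1 < 4 * m" using 3 by linarith
      then have "kadj (bd (i - N)) (bd (Suc (i - N)))" using badj by blast
      moreover have "q i = bd (i - N)" using qB 3 by simp
      moreover have "q (Suc i) = bd (Suc (i - N))" using qB[of "Suc i"] 3 by (simp add: Suc_diff_le)
      ultimately show ?thesis by simp
    next
      case 4
      then have iN: "i - N = ?L - 1" "N \<le> i" using L0 by arith+
      have "q i = bd (?L - 1)" using qB[of i] 4 iN by simp
      moreover have "q (Suc i) = (m - 1, n + 4)" using qM 4 by simp
      ultimately show ?thesis using bE by (auto simp: kadj_def)
    qed
  qed
  have q0: "q 0 = (0,0)" using qO N0 p0 by simp
  have qlast: "q (?M - 1) = (m - 2, n + 4 - 2) \<or> q (?M - 1) = (m - 3, n + 4 - 1)"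
  proof -
    have "q (?M - 1) = bd (?L - 1)" using qB[of "?M - 1"] L0 by (simp add: diff_diff_add)
    then show ?thesis using bE by (simp add: algebra_simps)
  qed
  have qrows: "\<forall>i<?M. 0 \<le> snd (q i) \<and> snd (q i) < n + 4"
  proof (intro allI impI)
    fix i assume i: "i < ?M"
    show "0 \<le> snd (q i) \<and> snd (q i) < n + 4"
    proof (cases "i < N")
      case True then show ?thesis using rows qO by auto
    next
      case False
      have "int (i - N) < 4 * m" using i False by linarith
      then have "n \<le> snd (bd (i - N)) \<and> snd (bd (i - N)) < n + 4" using brow by blast
      moreover have "q i = bd (i - N)" using qB[of i] False i by simp
      ultimately show ?thesis using n by simp
    qed
  qed
  show ?thesis unfolding Ftour_def gtour_def
    using MM q0 qM qadj qinj qrows qlast by simp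
qed

lemma bdo_props:
  assumes m: "0 < m" and om: "odd m"
  shows "bdo m n 0 = (m - 1, n)" "\<forall>j. int j < 4 * m \<longrightarrow> n \<le> snd (bdo m n j) \<and> snd (bdo m n j) < n + 4"
    "bdo m n (nat (4 * m) - 1) = (m - 2, n + 2)"
proof -
  show "bdo m n 0 = (m - 1, n)" using m by (simp add: bdo_def)
  show "\<forall>j. int j < 4 * m \<longrightarrow> n \<le> snd (bdo m n j) \<and> snd (bdo m n j) < n + 4"
    by (auto simp: bdo_def)
  have e: "int (nat (4 * m) - 1) = 4 * m - 1" using m by simp
  have "(2 * m - 1) mod 2 = 1" by presburger
  then show "bdo m n (nat (4 * m) - 1) = (m - 2, n + 2)" using m unfolding bdo_def e by simp
qed

lemma bde_props:
  assumes m: "0 < m" and em: "even m"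
  shows "bde m n 0 = (m - 1, n)" "\<forall>j. int j < 4 * m \<longrightarrow> n \<le> snd (bde m n j) \<and> snd (bde m n j) < n + 4"
    "bde m n (nat (4 * m) - 1) = (m - 3, n + 3)"
proof -
  show "bde m n 0 = (m - 1, n)" using m by (simp add: bde_def)
  show "\<forall>j. int j < 4 * m \<longrightarrow> n \<le> snd (bde m n j) \<and> snd (bde m n j) < n + 4"
    by (auto simp: bde_def)
  have e: "int (nat (4 * m) - 1) = 4 * m - 1" using m by simp
  have "(m - 1) mod 2 = 1" using em by presburger
  then show "bde m n (nat (4 * m) - 1) = (m - 3, n + 3)" using m unfolding bde_def e by simp
qed

lemma L1:
  assumes m: "0 < m" and n: "0 < n" and t: "Ftour m n p N"
  shows "\<exists>q. Ftour m (n + 4) q (N + nat (4 * m))"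
proof (cases "odd m")
  case True
  note P = bdo_props[OF m True, of n]
  show ?thesis
    by (rule exI, rule L1gen[OF m n t P(1) _ P(2) bdo_inj[OF m True]])
      (use bdo_adj[OF m] P(3) in auto)
next
  case False
  then have em: "even m" by simp
  note P = bde_props[OF m em, of n]
  show ?thesis
    by (rule exI, rule L1gen[OF m n t P(1) _ P(2) bde_inj[OF m em]])
      (use bde_adj[OF m em] P(3) in auto)
qed

definition h3 :: "nat \<Rightarrow> pt" where
  "h3 i = (if i mod 3 = 0 then (int (i div 3), 0) else if i mod 3 = 1 then (int (i div 3) + 1, 2)
     else (int (i div 3) - 1, 1))"

lemma n3_tour:
  assumes m: "0 < m"
  shows "Ftour m 3 (\<lambda>i. if i < nat (3 * m) then h3 i else (m - 1, 3)) (nat (m * 3))"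
proof -
  define q where "q = (\<lambda>i. if i < nat (3 * m) then h3 i else (m - 1, 3))"
  let ?N = "nat (m * 3)"
  have NN: "?N = nat (3 * m)" by (simp add: mult.commute)
  have q0: "q 0 = (0,0)" using m by (simp add: q_def h3_def)
  have qN: "q ?N = (m - 1, 3)" using NN by (simp add: q_def)
  have qlast: "q (?N - 1) = (m - 2, 3 - 2)"
  proof -
    have a: "?N - 1 < nat (3 * m)" using m by simp
    define k where "k = nat (m - 1)"
    have k: "m = int k + 1" using m by (simp add: k_def)
    have e: "nat (m * 3) - 1 = 3 * k + 2" using k by (simp add: nat_add_distrib)
    have "(3 * k + 2) mod 3 = 2" "(3 * k + 2) div 3 = k" by presburger+
    then have b: "(?N - 1) mod 3 = 2" "int ((?N - 1) div 3) = m - 1" unfolding e using k by simp_all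
    show ?thesis using a b NN by (simp add: q_def h3_def)
  qed
  have qrow: "\<forall>i<?N. 0 \<le> snd (q i) \<and> snd (q i) < 3"
    using NN by (auto simp: q_def h3_def)
  have qadj: "\<forall>i<?N. kadj (q i) (q (Suc i))"
  proof (intro allI impI)
    fix i assume i: "i < ?N"
    show "kadj (q i) (q (Suc i))"
    proof (cases "Suc i < ?N")
      case True
      have "kadj (h3 i) (h3 (Suc i))"
      proof -
        consider "i mod 3 = 0" | "i mod 3 = 1" | "i mod 3 = 2" by linarith
        then show ?thesis
        proof cases
          case 1
          then have "Suc i mod 3 = 1" "Suc i div 3 = i div 3" by presburger+
          then show ?thesis using 1 by (simp add: h3_def kadj_def)
        next
          case 2
          then have "Suc i mod 3 = 2" "Suc i div 3 = i div 3" by presburger+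
          then show ?thesis using 2 by (simp add: h3_def kadj_def)
        next
          case 3
          then have "Suc i mod 3 = 0" "Suc i div 3 = i div 3 + 1" by presburger+
          then show ?thesis using 3 by (simp add: h3_def kadj_def)
        qed
      qed
      then show ?thesis using True i NN by (simp add: q_def)
    next
      case False
      then have si: "Suc i = ?N" using i by simp
      then have iN: "i = ?N - 1" by simp
      have "q (Suc i) = (m - 1, 3)" using qN si by simp
      moreover have "q i = (m - 2, 3 - 2)" using qlast iN by simp
      ultimately show ?thesis by (simp add: kadj_def)
    qed
  qed
  have qinj: "inj_on (\<lambda>i. cls m 3 (q i)) {..<?N}"
  proof (rule inj_onI)
    fix i j assume i: "i \<in> {..<?N}" and j: "j \<in> {..<?N}" and e: "cls m 3 (q i) = cls m 3 (q j)"
    have ri: "0 \<le> snd (q i) \<and> snd (q i) < 3" "0 \<le> snd (q j) \<and> snd (q j) < 3" using qrow i j by auto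
    have e2: "fst (q i) mod m = fst (q j) mod m \<and> snd (q i) = snd (q j)"
      using e cls_rows[of "q i" 3 m] cls_rows[of "q j" 3 m] ri by simp
    have qi: "q i = h3 i" "q j = h3 j" using i j NN by (auto simp: q_def)
    have s3: "snd (h3 i) = snd (h3 j)" using e2 qi by simp
    have "i mod 3 < 3" "j mod 3 < 3" by simp_all
    then have t: "i mod 3 = j mod 3" using s3 unfolding h3_def by (auto split: if_splits)
    have d: "m dvd (int (i div 3) - int (j div 3))"
      using e2 qi t mod_dvd[of "fst (q i)" m "fst (q j)"] unfolding h3_def by (auto split: if_splits)
    have b: "int (i div 3) < m" "int (j div 3) < m" using i j NN by auto
    have "int (i div 3) = int (j div 3)" by (rule zig_lemma[OF m _ b(1) _ b(2) d]) auto
    then have "i div 3 = j div 3" by simp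
    then show "i = j" using t by (metis div_mult_mod_eq)
  qed
  show ?thesis unfolding Ftour_def gtour_def q_def[symmetric]
    using q0 qN qlast qrow qadj qinj by simp
qed

definition h1 :: "int \<Rightarrow> nat \<Rightarrow> pt" where
  "h1 m i = (let y0 = 2 * ((m - 2) mod 2) in
     if int i \<le> m - 2 then (int i, 2 * (int i mod 2)) else if int i = m - 1 then (m, y0 + 1) else (m - 1, y0 - 1))"

lemma n1_tour:
  assumes m: "2 \<le> m"
  shows "gtour m 1 (h1 m) (nat (m * 1))"
proof -
  let ?N = "nat (m * 1)"
  have NN: "int ?N = m" using m by simp
  have h0: "h1 m 0 = (0,0)" using m by (simp add: h1_def)
  have hN: "h1 m ?N = (m - 1, 1) \<or> h1 m ?N = (m - 1, - 1)"
  proof -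
    have "(m - 2) mod 2 = 0 \<or> (m - 2) mod 2 = 1" by presburger
    then show ?thesis using NN m unfolding h1_def Let_def by auto
  qed
  have hadj: "\<forall>i<?N. kadj (h1 m i) (h1 m (Suc i))"
  proof (intro allI impI)
    fix i assume i: "i < ?N"
    then have ii: "int i < m" using NN by linarith
    consider "int i + 1 \<le> m - 2" | "int i = m - 2" | "int i = m - 1" using ii by linarith
    then show "kadj (h1 m i) (h1 m (Suc i))"
    proof cases
      case 1 then show ?thesis unfolding h1_def kadj_def Let_def by (simp; presburger)
    next
      case 2
      have "(m - 2) mod 2 = int i mod 2" using 2 by simp
      then show ?thesis using 2 unfolding h1_def kadj_def Let_def by simp
    next
      case 3 then show ?thesis unfolding h1_def kadj_def Let_def by simp
    qed
  qed
  have hcls: "\<And>i. int i < m \<Longrightarrow> cls m 1 (h1 m i) = (if int i \<le> m - 2 then int i else m - 1, 0)"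
  proof -
    fix i assume ii: "int i < m"
    show "cls m 1 (h1 m i) = (if int i \<le> m - 2 then int i else m - 1, 0)"
    proof (cases "int i \<le> m - 2")
      case True
      then show ?thesis using m by (simp add: h1_def cls_def Let_def)
    next
      case False
      then have "int i = m - 1" using ii by simp
      moreover have "odd (2 * ((m - 2) mod 2) + 1)" by simp
      moreover have "(-1) mod m = m - 1" using m by (simp add: zmod_zminus1_eq_if)
      ultimately show ?thesis using m False by (simp add: h1_def cls_def Let_def)
    qed
  qed
  have hinj: "inj_on (\<lambda>i. cls m 1 (h1 m i)) {..<?N}"
  proof (rule inj_onI)
    fix i j assume i: "i \<in> {..<?N}" and j: "j \<in> {..<?N}" and e: "cls m 1 (h1 m i) = cls m 1 (h1 m j)"
    have ii: "int i < m" "int j < m" using i j NN by auto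
    have "(if int i \<le> m - 2 then int i else m - 1) = (if int j \<le> m - 2 then int j else m - 1)"
      using e hcls[OF ii(1)] hcls[OF ii(2)] by simp
    then have "int i = int j" using ii by (auto split: if_splits)
    then show "i = j" by simp
  qed
  show ?thesis unfolding gtour_def using h0 hN hadj hinj by simp
qed

lemma fp_7_5: "Fptour 7 5 (\<lambda>i. [(0, 0), (1, 2), (0, 4), (2, 3), (4, 4), (6, 3), (5, 1), (3, 0), (1, 1), (0, 3), (2, 4), (4, 3), (6, 4), (5, 2), (6, 0), (4, 1), (2, 0), (0, 1), (1, 3), (3, 2), (4, 0), (6, 1), (4, 2), (2, 1), (0, 2), (1, 4), (3, 3), (5, 4), (6, 2), (5, 0), (3, 1), (1, 0), (2, 2), (3, 4), (5, 3), (6, 5)] ! i) (nat (7 * 5))"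
  by (rule chkFp_Fptour) code_simp+

lemma fp_8_5: "Fptour 8 5 (\<lambda>i. [(0, 0), (2, 1), (1, 3), (0, 1), (2, 0), (1, 2), (0, 4), (2, 3), (0, 2), (1, 4), (3, 3), (5, 4), (7, 3), (6, 1), (4, 0), (3, 2), (2, 4), (0, 3), (1, 1), (3, 0), (4, 2), (3, 4), (5, 3), (7, 4), (6, 2), (7, 0), (5, 1), (4, 3), (6, 4), (7, 2), (6, 0), (4, 1), (2, 2), (1, 0), (3, 1), (5, 0), (7, 1), (5, 2), (4, 4), (6, 3), (7, 5)] ! i) (nat (8 * 5))"
  by (rule chkFp_Fptour) code_simp+

lemma fp_9_5: "Fptour 9 5 (\<lambda>i. [(0, 0), (1, 2), (0, 4), (2, 3), (4, 4), (6, 3), (8, 4), (7, 2), (8, 0), (6, 1), (8, 2), (7, 4), (5, 3), (3, 4), (1, 3), (0, 1), (2, 0), (3, 2), (4, 0), (2, 1), (0, 2), (1, 0), (3, 1), (5, 0), (7, 1), (8, 3), (6, 4), (5, 2), (6, 0), (4, 1), (2, 2), (1, 4), (3, 3), (5, 4), (4, 2), (3, 0), (1, 1), (0, 3), (2, 4), (4, 3), (5, 1), (7, 0), (6, 2), (8, 1), (7, 3), (8, 5)] ! i) (nat (9 * 5))"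
  by (rule chkFp_Fptour) code_simp+

lemma fp_10_5: "Fptour 10 5 (\<lambda>i. [(0, 0), (1, 2), (0, 4), (2, 3), (4, 4), (6, 3), (8, 4), (9, 2), (8, 0), (6, 1), (4, 0), (2, 1), (0, 2), (1, 4), (3, 3), (5, 4), (7, 3), (9, 4), (8, 2), (9, 0), (7, 1), (5, 0), (4, 2), (3, 4), (1, 3), (0, 1), (2, 0), (4, 1), (6, 0), (8, 1), (9, 3), (7, 4), (5, 3), (7, 2), (9, 1), (7, 0), (6, 2), (4, 3), (5, 1), (3, 2), (2, 4), (0, 3), (1, 1), (3, 0), (2, 2), (1, 0), (3, 1), (5, 2), (6, 4), (8, 3), (9, 5)] ! i) (nat (10 * 5))"
  by (rule chkFp_Fptour) code_simp+

lemma fp_11_5: "Fptour 11 5 (\<lambda>i. [(0, 0), (1, 2), (0, 4), (2, 3), (4, 4), (6, 3), (8, 4), (10, 3), (9, 1), (7, 0), (5, 1), (3, 0), (1, 1), (0, 3), (2, 4), (3, 2), (2, 0), (0, 1), (1, 3), (3, 4), (4, 2), (2, 1), (4, 0), (6, 1), (5, 3), (7, 4), (8, 2), (9, 0), (10, 2), (9, 4), (7, 3), (5, 4), (3, 3), (1, 4), (0, 2), (1, 0), (2, 2), (4, 1), (6, 0), (8, 1), (10, 0), (9, 2), (10, 4), (8, 3), (6, 2), (5, 0), (7, 1), (5, 2), (3, 1), (4, 3), (6, 4), (7, 2), (8, 0), (10, 1), (9, 3), (10, 5)] ! i) (nat (11 * 5))"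
  by (rule chkFp_Fptour) code_simp+

lemma fp_12_5: "Fptour 12 5 (\<lambda>i. [(0, 0), (2, 1), (1, 3), (0, 1), (2, 0), (1, 2), (0, 4), (2, 3), (0, 2), (1, 4), (3, 3), (5, 4), (7, 3), (9, 4), (11, 3), (10, 1), (8, 0), (6, 1), (4, 0), (3, 2), (4, 4), (5, 2), (3, 1), (1, 0), (2, 2), (3, 4), (4, 2), (5, 0), (7, 1), (9, 0), (11, 1), (9, 2), (10, 0), (11, 2), (10, 4), (8, 3), (6, 4), (4, 3), (2, 4), (0, 3), (1, 1), (3, 0), (5, 1), (6, 3), (8, 4), (7, 2), (6, 0), (4, 1), (5, 3), (7, 4), (8, 2), (7, 0), (6, 2), (8, 1), (9, 3), (11, 4), (10, 2), (11, 0), (9, 1), (10, 3), (11, 5)] ! i) (nat (12 * 5))"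
  by (rule chkFp_Fptour) code_simp+

lemma fp_7_6: "Fptour 7 6 (\<lambda>i. [(0, 0), (1, 2), (0, 4), (2, 5), (1, 3), (0, 5), (2, 4), (0, 3), (1, 5), (3, 4), (5, 5), (6, 3), (5, 1), (3, 0), (1, 1), (3, 2), (2, 0), (0, 1), (2, 2), (1, 0), (0, 2), (1, 4), (3, 5), (2, 3), (4, 4), (6, 5), (5, 3), (6, 1), (4, 0), (2, 1), (4, 2), (5, 0), (3, 1), (4, 3), (6, 4), (4, 5), (3, 3), (5, 2), (6, 0), (4, 1), (6, 2), (5, 4), (6, 6)] ! i) (nat (7 * 6))"
  by (rule chkFp_Fptour) code_simp+

lemma fp_9_6: "Fptour 9 6 (\<lambda>i. [(0, 0), (2, 1), (0, 2), (1, 0), (3, 1), (5, 0), (7, 1), (8, 3), (7, 5), (5, 4), (3, 5), (1, 4), (3, 3), (4, 5), (6, 4), (8, 5), (7, 3), (8, 1), (6, 0), (5, 2), (4, 0), (6, 1), (8, 0), (7, 2), (8, 4), (6, 5), (4, 4), (2, 5), (0, 4), (1, 2), (2, 0), (0, 1), (1, 3), (0, 5), (2, 4), (3, 2), (1, 1), (0, 3), (1, 5), (2, 3), (4, 2), (3, 0), (2, 2), (4, 1), (5, 3), (3, 4), (5, 5), (6, 3), (8, 2), (7, 0), (5, 1), (4, 3), (6, 2), (7, 4), (8, 6)] ! i) (nat (9 * 6))"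
  by (rule chkFp_Fptour) code_simp+

lemma fp_11_6: "Fptour 11 6 (\<lambda>i. [(0, 0), (2, 1), (4, 0), (6, 1), (8, 0), (10, 1), (9, 3), (10, 5), (8, 4), (10, 3), (9, 5), (7, 4), (5, 5), (3, 4), (1, 5), (0, 3), (1, 1), (3, 0), (4, 2), (5, 0), (3, 1), (1, 0), (0, 2), (1, 4), (3, 5), (2, 3), (0, 4), (1, 2), (2, 0), (0, 1), (2, 2), (4, 1), (6, 0), (7, 2), (9, 1), (7, 0), (5, 1), (4, 3), (6, 2), (8, 1), (10, 0), (9, 2), (10, 4), (8, 5), (6, 4), (8, 3), (10, 2), (9, 0), (7, 1), (5, 2), (7, 3), (6, 5), (5, 3), (4, 5), (2, 4), (0, 5), (1, 3), (3, 2), (4, 4), (2, 5), (3, 3), (5, 4), (7, 5), (6, 3), (8, 2), (9, 4), (10, 6)] ! i) (nat (11 * 6))"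
  by (rule chkFp_Fptour) code_simp+

lemma fp_7_8: "Fptour 7 8 (\<lambda>i. [(0, 0), (2, 1), (4, 0), (6, 1), (5, 3), (6, 5), (5, 7), (3, 6), (1, 7), (0, 5), (1, 3), (0, 1), (2, 0), (3, 2), (1, 1), (3, 0), (5, 1), (6, 3), (5, 5), (6, 7), (4, 6), (2, 7), (0, 6), (2, 5), (3, 7), (1, 6), (0, 4), (1, 2), (2, 4), (0, 3), (1, 5), (0, 7), (2, 6), (4, 7), (6, 6), (4, 5), (6, 4), (4, 3), (6, 2), (5, 0), (3, 1), (1, 0), (0, 2), (1, 4), (2, 2), (3, 4), (4, 2), (5, 4), (3, 3), (4, 1), (6, 0), (5, 2), (4, 4), (2, 3), (3, 5), (5, 6), (6, 8)] ! i) (nat (7 * 8))"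
  by (rule chkFp_Fptour) code_simp+

lemma fp_9_8: "Fptour 9 8 (\<lambda>i. [(0, 0), (2, 1), (0, 2), (1, 0), (3, 1), (5, 0), (7, 1), (8, 3), (7, 5), (8, 7), (6, 6), (8, 5), (7, 7), (5, 6), (3, 7), (1, 6), (0, 4), (1, 2), (2, 0), (0, 1), (1, 3), (0, 5), (1, 7), (2, 5), (0, 6), (2, 7), (4, 6), (6, 7), (8, 6), (7, 4), (8, 2), (7, 0), (6, 2), (8, 1), (6, 0), (4, 1), (3, 3), (1, 4), (2, 2), (0, 3), (1, 1), (3, 0), (5, 1), (4, 3), (3, 5), (5, 4), (7, 3), (5, 2), (4, 0), (3, 2), (2, 4), (3, 6), (1, 5), (0, 7), (2, 6), (4, 7), (5, 5), (3, 4), (4, 2), (2, 3), (4, 4), (6, 3), (8, 4), (6, 5), (5, 7), (4, 5), (5, 3), (6, 1), (8, 0), (7, 2), (6, 4), (7, 6), (8, 8)] ! i) (nat (9 * 8))"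
  by (rule chkFp_Fptour) code_simp+

lemma fp_11_8: "Fptour 11 8 (\<lambda>i. [(0, 0), (2, 1), (0, 2), (1, 0), (3, 1), (5, 0), (7, 1), (9, 0), (10, 2), (9, 4), (10, 6), (8, 7), (6, 6), (4, 7), (2, 6), (0, 7), (1, 5), (0, 3), (1, 1), (3, 0), (4, 2), (2, 3), (0, 4), (1, 6), (3, 7), (4, 5), (5, 7), (3, 6), (1, 7), (0, 5), (2, 4), (1, 2), (2, 0), (0, 1), (1, 3), (3, 2), (4, 0), (6, 1), (8, 0), (10, 1), (8, 2), (7, 0), (5, 1), (6, 3), (4, 4), (2, 5), (0, 6), (2, 7), (4, 6), (6, 7), (7, 5), (5, 6), (3, 5), (1, 4), (2, 2), (3, 4), (5, 5), (4, 3), (6, 4), (5, 2), (3, 3), (5, 4), (6, 2), (4, 1), (6, 0), (8, 1), (10, 0), (9, 2), (7, 3), (8, 5), (7, 7), (6, 5), (5, 3), (7, 2), (9, 1), (10, 3), (8, 4), (7, 6), (9, 7), (10, 5), (9, 3), (7, 4), (8, 6), (10, 7), (9, 5), (8, 3), (10, 4), (9, 6), (10, 8)] ! i) (nat (11 * 8))"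
  by (rule chkFp_Fptour) code_simp+

lemma ff_1_4: "Ftour 1 4 (\<lambda>i. [(0, 0), (- 1, 2), (- 3, 1), (- 2, 3), (0, 4)] ! i) (nat (1 * 4))"
  by (rule chkF_Ftour) code_simp+

lemma ff_3_4: "Ftour 3 4 (\<lambda>i. [(0, 0), (- 1, 2), (1, 3), (2, 1), (4, 0), (6, 1), (4, 2), (2, 3), (0, 2), (- 1, 0), (1, 1), (0, 3), (2, 4)] ! i) (nat (3 * 4))"
  by (rule chkF_Ftour) code_simp+

lemma ff_5_4: "Ftour 5 4 (\<lambda>i. [(0, 0), (- 1, 2), (1, 3), (2, 1), (3, 3), (5, 2), (7, 3), (8, 1), (6, 0), (4, 1), (5, 3), (7, 2), (9, 3), (11, 2), (12, 0), (10, 1), (8, 0), (6, 1), (4, 0), (3, 2), (4, 4)] ! i) (nat (5 * 4))"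
  by (rule chkF_Ftour) code_simp+

lemma ff_1_5: "Ftour 1 5 (\<lambda>i. [(0, 0), (2, 1), (0, 2), (1, 4), (- 1, 3), (0, 5)] ! i) (nat (1 * 5))"
  by (rule chkF_Ftour) code_simp+

lemma ff_2_5: "Ftour 2 5 (\<lambda>i. [(0, 0), (2, 1), (3, 3), (5, 4), (6, 2), (5, 0), (3, 1), (1, 2), (2, 4), (0, 3), (1, 5)] ! i) (nat (2 * 5))"
  by (rule chkF_Ftour) code_simp+

lemma ff_3_5: "Ftour 3 5 (\<lambda>i. [(0, 0), (2, 1), (4, 0), (6, 1), (8, 0), (7, 2), (6, 4), (8, 3), (7, 1), (5, 2), (3, 3), (1, 4), (0, 2), (- 1, 4), (1, 3), (2, 5)] ! i) (nat (3 * 5))"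
  by (rule chkF_Ftour) code_simp+

lemma ff_4_5: "Ftour 4 5 (\<lambda>i. [(0, 0), (2, 1), (3, 3), (5, 4), (4, 2), (5, 0), (3, 1), (1, 2), (2, 4), (4, 3), (5, 1), (3, 0), (2, 2), (3, 4), (1, 3), (0, 1), (- 2, 0), (- 1, 2), (0, 4), (2, 3), (3, 5)] ! i) (nat (4 * 5))"
  by (rule chkF_Ftour) code_simp+

lemma ff_5_5: "Ftour 5 5 (\<lambda>i. [(0, 0), (2, 1), (4, 0), (6, 1), (8, 0), (9, 2), (8, 4), (6, 3), (4, 4), (2, 3), (0, 4), (- 2, 3), (0, 2), (1, 4), (2, 2), (1, 0), (3, 1), (4, 3), (5, 1), (3, 2), (2, 0), (1, 2), (- 1, 1), (0, 3), (2, 4), (4, 5)] ! i) (nat (5 * 5))"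
  by (rule chkF_Ftour) code_simp+

lemma ff_6_5: "Ftour 6 5 (\<lambda>i. [(0, 0), (2, 1), (4, 0), (6, 1), (8, 0), (10, 1), (9, 3), (11, 4), (13, 3), (15, 4), (17, 3), (19, 4), (20, 2), (19, 0), (18, 2), (17, 0), (16, 2), (15, 0), (17, 1), (15, 2), (14, 4), (12, 3), (13, 1), (11, 2), (10, 4), (8, 3), (9, 1), (7, 2), (6, 4), (4, 3), (5, 5)] ! i) (nat (6 * 5))"
  by (rule chkF_Ftour) code_simp+

lemma ff_1_6: "Ftour 1 6 (\<lambda>i. [(0, 0), (2, 1), (4, 2), (2, 3), (1, 5), (- 1, 4), (0, 6)] ! i) (nat (1 * 6))"
  by (rule chkF_Ftour) code_simp+

lemma ff_3_6: "Ftour 3 6 (\<lambda>i. [(0, 0), (2, 1), (4, 0), (6, 1), (8, 0), (7, 2), (6, 4), (8, 5), (7, 3), (5, 2), (7, 1), (6, 3), (7, 5), (5, 4), (3, 5), (2, 3), (0, 2), (1, 4), (2, 6)] ! i) (nat (3 * 6))"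
  by (rule chkF_Ftour) code_simp+

lemma ff_5_6: "Ftour 5 6 (\<lambda>i. [(0, 0), (- 2, 1), (- 4, 0), (- 6, 1), (- 8, 0), (- 9, 2), (- 10, 4), (- 8, 5), (- 7, 3), (- 6, 5), (- 8, 4), (- 10, 5), (- 11, 3), (- 12, 5), (- 14, 4), (- 15, 2), (- 13, 1), (- 11, 0), (- 12, 2), (- 10, 1), (- 8, 2), (- 7, 0), (- 6, 2), (- 4, 1), (- 5, 3), (- 4, 5), (- 3, 3), (- 1, 4), (1, 3), (3, 4), (4, 6)] ! i) (nat (5 * 6))"
  by (rule chkF_Ftour) code_simp+

lemma ww_5_2: "Wtour 5 2 (\<lambda>i. [(0, 0), (2, 1), (4, 0), (3, - 2), (1, - 1), (0, 1), (2, 2), (0, 3), (1, 1), (3, 0), (4, 2)] ! i) (nat (5 * 2))"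
  by (rule chkW_Wtour) code_simp+

lemma ww_7_2: "Wtour 7 2 (\<lambda>i. [(0, 0), (2, - 1), (3, - 3), (1, - 4), (0, - 2), (2, - 3), (4, - 4), (6, - 5), (5, - 7), (3, - 6), (5, - 5), (6, - 3), (4, - 2), (5, 0), (6, 2)] ! i) (nat (7 * 2))"
  by (rule chkW_Wtour) code_simp+

lemma ww_9_2: "Wtour 9 2 (\<lambda>i. [(0, 0), (2, 1), (3, - 1), (4, - 3), (6, - 4), (8, - 5), (7, - 7), (5, - 6), (4, - 4), (3, - 2), (5, - 1), (7, - 2), (8, 0), (6, 1), (7, - 1), (8, - 3), (6, - 2), (7, 0), (8, 2)] ! i) (nat (9 * 2))"
  by (rule chkW_Wtour) code_simp+

lemma ww_7_4: "Wtour 7 4 (\<lambda>i. [(0, 0), (2, - 1), (1, 1), (0, - 1), (1, - 3), (2, - 5), (4, - 4), (3, - 2), (4, 0), (6, - 1), (4, - 2), (3, - 4), (1, - 5), (0, - 7), (1, - 9), (0, - 11), (2, - 10), (4, - 11), (3, - 9), (2, - 11), (0, - 10), (1, - 8), (0, - 6), (1, - 4), (3, - 3), (5, - 2), (6, 0), (5, 2), (6, 4)] ! i) (nat (7 * 4))"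
  by (rule chkW_Wtour) code_simp+

lemma ww_9_4: "Wtour 9 4 (\<lambda>i. [(0, 0), (2, 1), (3, - 1), (2, - 3), (1, - 5), (3, - 4), (4, - 6), (3, - 8), (5, - 9), (4, - 11), (6, - 10), (7, - 8), (5, - 7), (4, - 9), (2, - 10), (0, - 11), (1, - 9), (0, - 7), (2, - 8), (3, - 6), (4, - 4), (3, - 2), (5, - 3), (6, - 1), (8, - 2), (7, - 4), (8, - 6), (6, - 5), (7, - 7), (8, - 5), (7, - 3), (8, - 1), (6, 0), (7, - 2), (8, 0), (7, 2), (8, 4)] ! i) (nat (9 * 4))"
  by (rule chkW_Wtour) code_simp+

lemma ww_11_4: "Wtour 11 4 (\<lambda>i. [(0, 0), (2, 1), (4, 2), (5, 4), (7, 3), (6, 1), (4, 0), (5, 2), (3, 3), (2, 5), (4, 4), (6, 5), (5, 3), (7, 2), (9, 3), (7, 4), (6, 2), (7, 0), (8, 2), (10, 1), (9, - 1), (7, - 2), (5, - 3), (6, - 5), (8, - 4), (10, - 3), (8, - 2), (9, - 4), (7, - 3), (6, - 1), (7, 1), (8, - 1), (10, - 2), (9, 0), (10, 2), (8, 3), (9, 5), (10, 3), (9, 1), (10, - 1), (8, 0), (9, - 2), (10, 0), (9, 2), (10, 4)] ! i) (nat (11 * 4))"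
  by (rule chkW_Wtour) code_simp+

lemma gg_1_2: "gtour 1 2 (\<lambda>i. [(0, 0), (2, 1), (0, 2)] ! i) (nat (1 * 2))"
  by (rule chkG_gtour) code_simp+

lemma gg_3_2: "gtour 3 2 (\<lambda>i. [(0, 0), (- 2, 1), (- 3, - 1), (- 1, 0), (- 2, 2), (0, 1), (2, 2)] ! i) (nat (3 * 2))"
  by (rule chkG_gtour) code_simp+

lemma band_5: "bandok 5 [(0, 4), (1, 2), (0, 0), (2, 1), (4, 0), (5, 2), (4, 4), (2, 3), (0, 2), (1, 0), (3, 1), (5, 0), (4, 2), (5, 4), (3, 3), (1, 4), (2, 2), (0, 1), (1, 3), (3, 4), (5, 3), (4, 1), (2, 0), (3, 2), (2, 4), (0, 3), (1, 1), (3, 0), (5, 1), (4, 3)]"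
  by code_simp

lemma band_6: "bandok 6 [(0, 5), (1, 3), (0, 1), (2, 0), (4, 1), (5, 3), (4, 5), (2, 4), (0, 3), (1, 5), (3, 4), (5, 5), (4, 3), (5, 1), (3, 2), (1, 1), (3, 0), (2, 2), (1, 0), (0, 2), (1, 4), (3, 5), (5, 4), (4, 2), (5, 0), (3, 1), (2, 3), (0, 4), (1, 2), (0, 0), (2, 1), (4, 0), (5, 2), (3, 3), (2, 5), (4, 4)]"
  by code_simp

lemma band_8: "bandok 8 [(0, 7), (1, 5), (0, 3), (1, 1), (3, 0), (5, 1), (4, 3), (5, 5), (4, 7), (2, 6), (0, 5), (1, 7), (3, 6), (5, 7), (4, 5), (3, 7), (5, 6), (4, 4), (5, 2), (4, 0), (3, 2), (2, 4), (1, 6), (0, 4), (2, 3), (3, 1), (5, 0), (4, 2), (5, 4), (3, 5), (2, 7), (0, 6), (1, 4), (0, 2), (1, 0), (2, 2), (0, 1), (2, 0), (4, 1), (5, 3), (3, 4), (1, 3), (2, 1), (0, 0), (1, 2), (3, 3), (2, 5), (4, 6)]"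
  by code_simp

lemma strip_2: "stripok 3 2 [(0, 0), (2, - 1), (0, - 2), (1, - 4), (2, - 2), (0, - 1), (1, 1)] [(0, - 1), (1, 1), (2, 3), (0, 2), (1, 0)]"
  by code_simp

lemma strip_4: "stripok 3 4 [(0, 0), (2, - 1), (1, - 3), (0, - 1), (1, 1)] [(0, 1), (2, 2), (1, 0), (0, 2), (1, 4), (0, 6), (2, 7), (0, 8), (2, 9), (1, 7), (2, 5), (1, 3), (0, 5), (2, 6), (0, 7), (2, 8), (1, 6), (0, 4), (1, 2)]"
  by code_simp

lemma Fp_all:
  assumes n: "0 < n" and band: "bandok n B" and m0: "0 < m0"
    and base: "\<And>m. m0 \<le> m \<Longrightarrow> m < m0 + 6 \<Longrightarrow> Q m \<Longrightarrow> \<exists>p. Fptour m n p (nat (m * n))"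
    and Q: "\<And>m. Q (m + 6) \<longleftrightarrow> Q m"
  shows "m0 \<le> m \<Longrightarrow> Q m \<Longrightarrow> \<exists>p. Fptour m n p (nat (m * n))"
proof (induction "nat (m - m0)" arbitrary: m rule: less_induct)
  case less
  show ?case
  proof (cases "m < m0 + 6")
    case True then show ?thesis using base less.prems by blast
  next
    case False
    define m' where "m' = m - 6"
    have mm: "m = m' + 6" by (simp add: m'_def)
    have h1: "m0 \<le> m'" using False by (simp add: m'_def)
    have h2: "Q m'" using less.prems(2) Q[of m'] mm by simp
    have "nat (m' - m0) < nat (m - m0)" using False by (simp add: m'_def)
    then obtain p where p: "Fptour m' n p (nat (m' * n))" using less.hyps h1 h2 by blast
    have m'0: "0 < m'" using h1 m0 by simp
    have LB: "length B = nat (6 * n)" using band by (simp add: bandok_def)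
    have "\<exists>q. Fptour (m' + 6) n q (nat (m' * n) + length B)" using L2[OF m'0 n p band] by blast
    moreover have "nat (m' * n) + length B = nat (m * n)" using LB m'0 n mm
      by (simp add: distrib_right nat_add_distrib[symmetric])
    ultimately show ?thesis using mm by simp
  qed
qed

lemma W_all:
  assumes n: "0 < n" and st: "stripok 3 n A B" and m0: "0 < m0"
    and base: "\<And>m. m0 \<le> m \<Longrightarrow> m < m0 + 6 \<Longrightarrow> Q m \<Longrightarrow> \<exists>p. Wtour m n p (nat (m * n))"
    and Q: "\<And>m. Q (m + 6) \<longleftrightarrow> Q m"
  shows "m0 \<le> m \<Longrightarrow> Q m \<Longrightarrow> \<exists>p. Wtour m n p (nat (m * n))"
proof (induction "nat (m - m0)" arbitrary: m rule: less_induct)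
  case less
  show ?case
  proof (cases "m < m0 + 6")
    case True then show ?thesis using base less.prems by blast
  next
    case False
    define m' where "m' = m - 6"
    have mm: "m = m' + 2 * 3" by (simp add: m'_def)
    have h1: "m0 \<le> m'" using False by (simp add: m'_def)
    have h2: "Q m'" using less.prems(2) Q[of m'] mm by simp
    have "nat (m' - m0) < nat (m - m0)" using False by (simp add: m'_def)
    then obtain p where p: "Wtour m' n p (nat (m' * n))" using less.hyps h1 h2 by blast
    have m'0: "0 < m'" using h1 m0 by simp
    have LB: "length A + length B = nat (2 * 3 * n)" using st by (simp add: stripok_def)
    have "\<exists>q. Wtour (m' + 2 * 3) n q (length A + nat (m' * n) + length B)" using L3[OF m'0 n p st] by blast
    moreover have "length A + nat (m' * n) + length B = nat (m * n)"
    proof -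
      have "nat (m * n) = nat (m' * n) + nat (6 * n)" using m'0 n mm by (simp add: distrib_right nat_add_distrib)
      then show ?thesis using LB by simp
    qed
    ultimately show ?thesis using mm by simp
  qed
qed

lemma Fptour_Ftour: "Fptour m n p N \<Longrightarrow> Ftour m n p N" by (simp add: Fptour_def)

lemma Ftour_gtour: "Ftour m n p N \<Longrightarrow> gtour m n p N" by (simp add: Ftour_def)
lemma Wtour_gtour: "Wtour m n p N \<Longrightarrow> gtour m n p N" by (simp add: Wtour_def)

lemma odd_shift: "odd ((m::int) + 6) \<longleftrightarrow> odd m" by presburger

lemma Fp5: "7 \<le> m \<Longrightarrow> \<exists>p. Fptour m 5 p (nat (m * 5))"
proof -
  assume h: "7 \<le> m"
  have b: "\<And>m. 7 \<le> m \<Longrightarrow> m < 7 + 6 \<Longrightarrow> True \<Longrightarrow> \<exists>p. Fptour m 5 p (nat (m * 5))"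
  proof -
    fix m :: int assume "7 \<le> m" "m < 7 + 6"
    then have "m = 7 \<or> m = 8 \<or> m = 9 \<or> m = 10 \<or> m = 11 \<or> m = 12" by arith
    then show "\<exists>p. Fptour m 5 p (nat (m * 5))"
      using fp_7_5 fp_8_5 fp_9_5 fp_10_5 fp_11_5 fp_12_5 by blast
  qed
  show ?thesis using Fp_all[of 5 _ 7 "\<lambda>_. True", OF _ band_5 _ b] h by simp
qed

lemma Fp6: "7 \<le> m \<Longrightarrow> odd m \<Longrightarrow> \<exists>p. Fptour m 6 p (nat (m * 6))"
proof -
  assume h: "7 \<le> m" "odd m"
  have b: "\<And>m. 7 \<le> m \<Longrightarrow> m < 7 + 6 \<Longrightarrow> odd m \<Longrightarrow> \<exists>p. Fptour m 6 p (nat (m * 6))"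
  proof -
    fix m :: int assume "7 \<le> m" "m < 7 + 6" "odd m"
    then have "m = 7 \<or> m = 9 \<or> m = 11" by presburger
    then show "\<exists>p. Fptour m 6 p (nat (m * 6))"
      using fp_7_6 fp_9_6 fp_11_6 by blast
  qed
  show ?thesis using Fp_all[of 6 _ 7 "\<lambda>m. odd m", OF _ band_6 _ b] h odd_shift by simp
qed

lemma Fp8: "7 \<le> m \<Longrightarrow> odd m \<Longrightarrow> \<exists>p. Fptour m 8 p (nat (m * 8))"
proof -
  assume h: "7 \<le> m" "odd m"
  have b: "\<And>m. 7 \<le> m \<Longrightarrow> m < 7 + 6 \<Longrightarrow> odd m \<Longrightarrow> \<exists>p. Fptour m 8 p (nat (m * 8))"
  proof -
    fix m :: int assume "7 \<le> m" "m < 7 + 6" "odd m"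
    then have "m = 7 \<or> m = 9 \<or> m = 11" by presburger
    then show "\<exists>p. Fptour m 8 p (nat (m * 8))"
      using fp_7_8 fp_9_8 fp_11_8 by blast
  qed
  show ?thesis using Fp_all[of 8 _ 7 "\<lambda>m. odd m", OF _ band_8 _ b] h odd_shift by simp
qed

lemma W2: "5 \<le> m \<Longrightarrow> odd m \<Longrightarrow> \<exists>p. Wtour m 2 p (nat (m * 2))"
proof -
  assume h: "5 \<le> m" "odd m"
  have b: "\<And>m. 5 \<le> m \<Longrightarrow> m < 5 + 6 \<Longrightarrow> odd m \<Longrightarrow> \<exists>p. Wtour m 2 p (nat (m * 2))"
  proof -
    fix m :: int assume "5 \<le> m" "m < 5 + 6" "odd m"
    then have "m = 5 \<or> m = 7 \<or> m = 9" by presburger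
    then show "\<exists>p. Wtour m 2 p (nat (m * 2))"
      using ww_5_2 ww_7_2 ww_9_2 by blast
  qed
  show ?thesis using W_all[of 2 _ _ 5 "\<lambda>m. odd m", OF _ strip_2 _ b] h odd_shift by simp
qed

lemma W4: "7 \<le> m \<Longrightarrow> odd m \<Longrightarrow> \<exists>p. Wtour m 4 p (nat (m * 4))"
proof -
  assume h: "7 \<le> m" "odd m"
  have b: "\<And>m. 7 \<le> m \<Longrightarrow> m < 7 + 6 \<Longrightarrow> odd m \<Longrightarrow> \<exists>p. Wtour m 4 p (nat (m * 4))"
  proof -
    fix m :: int assume "7 \<le> m" "m < 7 + 6" "odd m"
    then have "m = 7 \<or> m = 9 \<or> m = 11" by presburger
    then show "\<exists>p. Wtour m 4 p (nat (m * 4))"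
      using ww_7_4 ww_9_4 ww_11_4 by blast
  qed
  show ?thesis using W_all[of 4 _ _ 7 "\<lambda>m. odd m", OF _ strip_4 _ b] h odd_shift by simp
qed

lemma F_base:
  assumes m: "0 < m" and n: "3 \<le> n" "n \<le> 6" and par: "odd m \<or> odd n" and ex: "\<not> (7 \<le> m \<and> n = 4)"
  shows "\<exists>p. Ftour m n p (nat (m * n))"
proof -
  have "n = 3 \<or> n = 4 \<or> n = 5 \<or> n = 6" using n by arith
  then show ?thesis
  proof (elim disjE)
    assume "n = 3" then show ?thesis using n3_tour[OF m] by blast
  next
    assume n4: "n = 4"
    then have "m = 1 \<or> m = 3 \<or> m = 5" using m par ex by presburger
    then show ?thesis using n4 ff_1_4 ff_3_4 ff_5_4 by blast
  next
    assume n5: "n = 5"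
    show ?thesis
    proof (cases "7 \<le> m")
      case True then show ?thesis using n5 Fp5 Fptour_Ftour by blast
    next
      case False
      then have "m = 1 \<or> m = 2 \<or> m = 3 \<or> m = 4 \<or> m = 5 \<or> m = 6" using m by arith
      then show ?thesis using n5 ff_1_5 ff_2_5 ff_3_5 ff_4_5 ff_5_5 ff_6_5 by blast
    qed
  next
    assume n6: "n = 6"
    then have om: "odd m" using par by simp
    show ?thesis
    proof (cases "7 \<le> m")
      case True then show ?thesis using n6 om Fp6 Fptour_Ftour by blast
    next
      case False
      then have "m = 1 \<or> m = 3 \<or> m = 5" using m om by presburger
      then show ?thesis using n6 ff_1_6 ff_3_6 ff_5_6 by blast
    qed
  qed
qed

lemma F_all:
  assumes m: "0 < m"
  shows "3 \<le> n \<Longrightarrow> (odd m \<or> odd n) \<Longrightarrow> \<not> (7 \<le> m \<and> n = 4) \<Longrightarrow> \<exists>p. Ftour m n p (nat (m * n))"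
proof (induction "nat n" arbitrary: n rule: less_induct)
  case less
  show ?case
  proof (cases "n \<le> 6")
    case True then show ?thesis using F_base[OF m] less.prems by blast
  next
    case False
    show ?thesis
    proof (cases "n = 8 \<and> 7 \<le> m")
      case True
      then have "odd m" using less.prems(2) by simp
      then show ?thesis using True Fp8 Fptour_Ftour by blast
    next
      case nb: False
      define n' where "n' = n - 4"
      have nn: "n = n' + 4" by (simp add: n'_def)
      have h1: "3 \<le> n'" using False by (simp add: n'_def)
      have h2: "odd m \<or> odd n'" using less.prems(2) nn by auto
      have h3: "\<not> (7 \<le> m \<and> n' = 4)" using nb nn by auto
      have "nat n' < nat n" using False by (simp add: n'_def)
      then obtain p where p: "Ftour m n' p (nat (m * n'))" using less.hyps h1 h2 h3 by blast
      have n'0: "0 < n'" using h1 by simp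
      have "\<exists>q. Ftour m (n' + 4) q (nat (m * n') + nat (4 * m))" using L1[OF m n'0 p] by blast
      moreover have "nat (m * n') + nat (4 * m) = nat (m * n)" using m n'0 nn
        by (simp add: distrib_left nat_add_distrib[symmetric] mult.commute)
      ultimately show ?thesis using nn by simp
    qed
  qed
qed

lemma exists_tour:
  assumes m: "0 < m" and n: "0 < n" and par: "odd m \<or> odd n" and mn: "1 < m \<or> 1 < n"
  shows "\<exists>p N. gtour m n p N"
proof -
  consider "n = 1" | "n = 2" | "n = 4" | "3 \<le> n" "n \<noteq> 4" using n by arith
  then show ?thesis
  proof cases
    case 1
    then have "2 \<le> m" using mn by simp
    then show ?thesis using n1_tour 1 by blast
  next
    case 2
    then have om: "odd m" using par by simp
    show ?thesis
    proof (cases "5 \<le> m")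
      case True then show ?thesis using W2[OF True om] Wtour_gtour 2 by blast
    next
      case False
      then have "m = 1 \<or> m = 3" using m om by presburger
      then show ?thesis using 2 gg_1_2 gg_3_2 by blast
    qed
  next
    case 3
    then have om: "odd m" using par by simp
    show ?thesis
    proof (cases "7 \<le> m")
      case True then show ?thesis using W4[OF True om] Wtour_gtour 3 by blast
    next
      case False
      then show ?thesis using F_all[OF m, of n] 3 om Ftour_gtour by fastforce
    qed
  next
    case 4
    then show ?thesis using F_all[OF m, of n] par Ftour_gtour by blast
  qed
qed

theorem theorem6p3:
  fixes m n :: int
  assumes "0 < m" and "0 < n" and "1 < m \<or> 1 < n"
  shows "(\<exists>p N. mobius_knight_tour m n p N) \<longleftrightarrow> (odd m \<or> odd n)"
proof
  assume "\<exists>p N. mobius_knight_tour m n p N"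
  then obtain p N where t: "mobius_knight_tour m n p N" by blast
  show "odd m \<or> odd n"
  proof (rule ccontr)
    assume "\<not> (odd m \<or> odd n)"
    then have "even m" "even n" by auto
    then show False using only_if[OF assms(1,2) _ _ t] by blast
  qed
next
  assume "odd m \<or> odd n"
  then obtain p N where "gtour m n p N" using exists_tour assms by blast
  then show "\<exists>p N. mobius_knight_tour m n p N" using gtour_mobius assms by blast
qed

end
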